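(* Let $\mathbb{K}$ be a topological field, $d\in\mathbb{N}$, $F$ a topological $\mathbb{K}$-vector space, $U\subseteq\mathbb{K}^d$ open or of the form $U_1\times\cdots\times U_d$ with $U_i\subseteq\mathbb{K}$ having dense interior, and $f\colon U\to F$. If $f$ is $C^k_{SDS}$ for some $k\in\mathbb{N}_0$ (resp., if $\mathbb{K}$ is a valued field and $f$ is $C^{k,\sigma}_{SDS}$ for some $\sigma>0$), then for each $\alpha\in\mathbb{N}_0^d$ with $|\alpha|\le k$ the map $f^{<\alpha>}\colon U^{<\alpha>}\to F$ is $C^{k-|\alpha|}_{SDS}$ (resp., $C^{k-|\alpha|,\sigma}_{SDS}$).
   Context: Topological fields are Hausdorff and non-discrete; vector spaces Hausdorff; valued field: absolute value defining a non-discrete topology. For $\alpha\in\mathbb{N}_0^d$, $|\alpha|=\sum\alpha_i$; write $x\in\mathbb{K}^{d+|\alpha|}$ as $(x^{(1)},\ldots,x^{(d)})$, $x^{(i)}=(x^{(i)}_0,\ldots,x^{(i)}_{\alpha_i})$. $U^{<\alpha>}$: set of $x$ with $(x^{(1)}_{i_1},\ldots,x^{(d)}_{i_d})\in U$ for all $0\le i_\ell\le\alpha_\ell$ (this is open, resp. a product of sets with dense interior, in $\mathbb{K}^{d+|\alpha|}$, so the same definitions apply to maps on it with $d$ replaced by $d+|\alpha|$); $U^{>\alpha<}$: those $x$ whose entries within each block $x^{(i)}$ are pairwise distinct. $f^{>0<}=f$ and $f^{>\alpha<}(x)=\sum_{j_1=0}^{\alpha_1}\cdots\sum_{j_d=0}^{\alpha_d}\big(\prod_{\ell=1}^d\prod_{k_\ell\neq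 j_\ell}(x^{(\ell)}_{j_\ell}-x^{(\ell)}_{k_\ell})^{-1}\big)f(x^{(1)}_{j_1},\ldots,x^{(d)}_{j_d})$. $f$ is $C^0_{SDS}$ if continuous ($f^{<0>}=f$); $C^k_{SDS}$ if $C^{k-1}_{SDS}$ and for all $|\alpha|=k$, $f^{>\alpha<}$ extends continuously to $f^{<\alpha>}\colon U^{<\alpha>}\to F$. Gauge on a vector space $E$ over a valued field: $q\colon E\to[0,\infty[$, $q(tx)=|t|q(x)$, each $\{q<r\}$ a $0$-neighbourhood. $g$ on $V\subseteq E$ is $C^{0,\sigma}$ if for each $x_0\in V$ and gauge $q$ on $F$ there are a gauge $p$ on $E$ and a neighbourhood $W$ of $x_0$ in $V$ with $q(g(y)-g(x))\le p(y-x)^\sigma$ for $x,y\in W$. $C^{k,\sigma}_{SDS}$: $C^k_{SDS}$ with each $f^{<\alpha>}$, $|\alpha|\le k$, $C^{0,\sigma}$. *)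

theory Defs
  imports "HOL-Analysis.Analysis"
begin

definition top_field :: "('k::{field,t2_space}) itself \<Rightarrow> bool" where
  "top_field _ \<longleftrightarrow>
     continuous_on UNIV (\<lambda>p::'k \<times> 'k. fst p + snd p) \<and>
     continuous_on UNIV (\<lambda>p::'k \<times> 'k. fst p * snd p) \<and>
     continuous_on UNIV (\<lambda>x::'k. - x) \<and>
     continuous_on (UNIV - {0}) (\<lambda>x::'k. inverse x) \<and>
     \<not> open {0::'k}"

definition top_vector_space :: "('k::{field,t2_space} \<Rightarrow> 'f::{ab_group_add,t2_space} \<Rightarrow> 'f) \<Rightarrow> bool" where
  "top_vector_space smul \<longleftrightarrow>
     vector_space smul \<and>
     continuous_on UNIV (\<lambda>p::'f \<times> 'f. fst p + snd p) \<and>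
     continuous_on UNIV (\<lambda>p::'k \<times> 'f. smul (fst p) (snd p))"

definition valued_field :: "('k::{field,t2_space} \<Rightarrow> real) \<Rightarrow> bool" where
  "valued_field absv \<longleftrightarrow>
     (\<forall>x. 0 \<le> absv x) \<and> (\<forall>x. absv x = 0 \<longleftrightarrow> x = 0) \<and>
     (\<forall>x y. absv (x * y) = absv x * absv y) \<and>
     (\<forall>x y. absv (x + y) \<le> absv x + absv y) \<and>
     (\<forall>S::'k set. open S \<longleftrightarrow> (\<forall>x\<in>S. \<exists>e>0. \<forall>y. absv (y - x) < e \<longrightarrow> y \<in> S))"

text \<open>K^n is modelled as extensional functions on {..<n} with the product topology.\<close>
definition Kn :: "nat \<Rightarrow> (nat \<Rightarrow> 'k::topological_space) topology" where
  "Kn n = product_topology (\<lambda>_. euclidean) {..<n}"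

definition vzero :: "nat \<Rightarrow> nat \<Rightarrow> 'k::field" where
  "vzero n = restrict (\<lambda>i. 0) {..<n}"

definition vscale :: "nat \<Rightarrow> 'k::field \<Rightarrow> (nat \<Rightarrow> 'k) \<Rightarrow> nat \<Rightarrow> 'k" where
  "vscale n t x = restrict (\<lambda>i. t * x i) {..<n}"

definition vdiff :: "nat \<Rightarrow> (nat \<Rightarrow> 'k::field) \<Rightarrow> (nat \<Rightarrow> 'k) \<Rightarrow> nat \<Rightarrow> 'k" where
  "vdiff n y x = restrict (\<lambda>i. y i - x i) {..<n}"

text \<open>A multi-index alpha in N_0^d is a function nat => nat of which only the values
  at 0..d-1 matter; |alpha| is their sum.\<close>
definition absm :: "nat \<Rightarrow> (nat \<Rightarrow> nat) \<Rightarrow> nat" where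
  "absm d \<alpha> = (\<Sum>i<d. \<alpha> i)"

text \<open>Position of the entry x^(i)_j (0-based block i, 0 <= j <= alpha i) in a point of K^(d+|alpha|).\<close>
definition bpos :: "(nat \<Rightarrow> nat) \<Rightarrow> nat \<Rightarrow> nat \<Rightarrow> nat" where
  "bpos \<alpha> i j = (\<Sum>l<i. Suc (\<alpha> l)) + j"

definition idx :: "nat \<Rightarrow> (nat \<Rightarrow> nat) \<Rightarrow> (nat \<Rightarrow> nat) set" where
  "idx d \<alpha> = PiE {..<d} (\<lambda>i. {..\<alpha> i})"

definition pick :: "nat \<Rightarrow> (nat \<Rightarrow> nat) \<Rightarrow> (nat \<Rightarrow> 'k) \<Rightarrow> (nat \<Rightarrow> nat) \<Rightarrow> nat \<Rightarrow> 'k" where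
  "pick d \<alpha> x j = restrict (\<lambda>i. x (bpos \<alpha> i (j i))) {..<d}"

definition Ulow :: "nat \<Rightarrow> (nat \<Rightarrow> 'k::topological_space) set \<Rightarrow> (nat \<Rightarrow> nat) \<Rightarrow> (nat \<Rightarrow> 'k) set" where
  "Ulow d U \<alpha> = {x \<in> topspace (Kn (d + absm d \<alpha>)). \<forall>j\<in>idx d \<alpha>. pick d \<alpha> x j \<in> U}"

definition Ugt :: "nat \<Rightarrow> (nat \<Rightarrow> 'k::topological_space) set \<Rightarrow> (nat \<Rightarrow> nat) \<Rightarrow> (nat \<Rightarrow> 'k) set" where
  "Ugt d U \<alpha> = {x \<in> Ulow d U \<alpha>. \<forall>i<d. \<forall>a\<le>\<alpha> i. \<forall>b\<le>\<alpha> i. a \<noteq> b \<longrightarrow> x (bpos \<alpha> i a) \<noteq> x (bpos \<alpha> i b)}"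

definition ddiff :: "('k::field \<Rightarrow> 'f \<Rightarrow> 'f::ab_group_add) \<Rightarrow> nat \<Rightarrow> (nat \<Rightarrow> nat)
    \<Rightarrow> ((nat \<Rightarrow> 'k) \<Rightarrow> 'f) \<Rightarrow> (nat \<Rightarrow> 'k) \<Rightarrow> 'f" where
  "ddiff smul d \<alpha> f x =
     (\<Sum>j\<in>idx d \<alpha>.
        smul (\<Prod>l<d. \<Prod>k\<in>{..\<alpha> l} - {j l}. inverse (x (bpos \<alpha> l (j l)) - x (bpos \<alpha> l k)))
             (f (pick d \<alpha> x j)))"

definition is_sds_ext :: "('k::{field,topological_space} \<Rightarrow> 'f \<Rightarrow> 'f::{ab_group_add,topological_space})
    \<Rightarrow> nat \<Rightarrow> (nat \<Rightarrow> 'k) set \<Rightarrow> (nat \<Rightarrow> nat) \<Rightarrow> ((nat \<Rightarrow> 'k) \<Rightarrow> 'f) \<Rightarrow> ((nat \<Rightarrow> 'k) \<Rightarrow> 'f) \<Rightarrow> bool" where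
  "is_sds_ext smul d U \<alpha> f g \<longleftrightarrow>
     continuous_map (subtopology (Kn (d + absm d \<alpha>)) (Ulow d U \<alpha>)) euclidean g \<and>
     (\<forall>x\<in>Ugt d U \<alpha>. g x = ddiff smul d \<alpha> f x)"

text \<open>f^<alpha>: the (unique, under the standing hypotheses) continuous extension.\<close>
definition sds_ext :: "('k::{field,topological_space} \<Rightarrow> 'f \<Rightarrow> 'f::{ab_group_add,topological_space})
    \<Rightarrow> nat \<Rightarrow> (nat \<Rightarrow> 'k) set \<Rightarrow> (nat \<Rightarrow> nat) \<Rightarrow> ((nat \<Rightarrow> 'k) \<Rightarrow> 'f) \<Rightarrow> (nat \<Rightarrow> 'k) \<Rightarrow> 'f" where
  "sds_ext smul d U \<alpha> f = (SOME g. is_sds_ext smul d U \<alpha> f g)"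

text \<open>C^k_SDS (the recursive definition unfolded: f^>alpha< extends continuously for all
  |alpha| <= k; for alpha = 0 this is continuity of f on U).\<close>
definition CkSDS :: "('k::{field,topological_space} \<Rightarrow> 'f \<Rightarrow> 'f::{ab_group_add,topological_space})
    \<Rightarrow> nat \<Rightarrow> (nat \<Rightarrow> 'k) set \<Rightarrow> nat \<Rightarrow> ((nat \<Rightarrow> 'k) \<Rightarrow> 'f) \<Rightarrow> bool" where
  "CkSDS smul d U k f \<longleftrightarrow> (\<forall>\<alpha>. absm d \<alpha> \<le> k \<longrightarrow> (\<exists>g. is_sds_ext smul d U \<alpha> f g))"

definition gauge_F :: "('k \<Rightarrow> real) \<Rightarrow> ('k \<Rightarrow> 'f \<Rightarrow> 'f::{ab_group_add,topological_space}) \<Rightarrow> ('f \<Rightarrow> real) \<Rightarrow> bool" where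
  "gauge_F absv smul q \<longleftrightarrow>
     (\<forall>x. 0 \<le> q x) \<and> (\<forall>t x. q (smul t x) = absv t * q x) \<and>
     (\<forall>r>0. \<exists>V. open V \<and> 0 \<in> V \<and> V \<subseteq> {x. q x < r})"

definition gauge_Kn :: "('k::{field,topological_space} \<Rightarrow> real) \<Rightarrow> nat \<Rightarrow> ((nat \<Rightarrow> 'k) \<Rightarrow> real) \<Rightarrow> bool" where
  "gauge_Kn absv n p \<longleftrightarrow>
     (\<forall>x\<in>topspace (Kn n). 0 \<le> p x) \<and>
     (\<forall>t. \<forall>x\<in>topspace (Kn n). p (vscale n t x) = absv t * p x) \<and>
     (\<forall>r>0. \<exists>V. openin (Kn n) V \<and> vzero n \<in> V \<and> V \<subseteq> {x. p x < r})"

definition C0sigma :: "('k::{field,topological_space} \<Rightarrow> real) \<Rightarrow> ('k \<Rightarrow> 'f \<Rightarrow> 'f::{ab_group_add,topological_space})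
    \<Rightarrow> nat \<Rightarrow> real \<Rightarrow> (nat \<Rightarrow> 'k) set \<Rightarrow> ((nat \<Rightarrow> 'k) \<Rightarrow> 'f) \<Rightarrow> bool" where
  "C0sigma absv smul n \<sigma> V g \<longleftrightarrow>
     (\<forall>x0\<in>V. \<forall>q. gauge_F absv smul q \<longrightarrow>
        (\<exists>p W. gauge_Kn absv n p \<and> openin (Kn n) W \<and> x0 \<in> W \<and>
           (\<forall>x\<in>W \<inter> V. \<forall>y\<in>W \<inter> V. q (g y - g x) \<le> p (vdiff n y x) powr \<sigma>)))"

definition CksigmaSDS :: "('k::{field,topological_space} \<Rightarrow> real) \<Rightarrow> ('k \<Rightarrow> 'f \<Rightarrow> 'f::{ab_group_add,topological_space})
    \<Rightarrow> nat \<Rightarrow> (nat \<Rightarrow> 'k) set \<Rightarrow> nat \<Rightarrow> real \<Rightarrow> ((nat \<Rightarrow> 'k) \<Rightarrow> 'f) \<Rightarrow> bool" where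
  "CksigmaSDS absv smul d U k \<sigma> f \<longleftrightarrow>
     CkSDS smul d U k f \<and>
     (\<forall>\<alpha>. absm d \<alpha> \<le> k \<longrightarrow>
        C0sigma absv smul (d + absm d \<alpha>) \<sigma> (Ulow d U \<alpha>) (sds_ext smul d U \<alpha> f))"

definition admissible_domain :: "nat \<Rightarrow> (nat \<Rightarrow> 'k::topological_space) set \<Rightarrow> bool" where
  "admissible_domain d U \<longleftrightarrow>
     openin (Kn d) U \<or>
     (\<exists>Us::nat \<Rightarrow> 'k set. U = PiE {..<d} Us \<and> (\<forall>i<d. Us i \<subseteq> closure (interior (Us i))))"

end

theory Submission
  imports Defs
begin


definition offs :: "(nat \<Rightarrow> nat) \<Rightarrow> nat \<Rightarrow> nat" where
  "offs sz k = (\<Sum>l<k. sz l)"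

lemma offs_Suc[simp]: "offs sz (Suc k) = offs sz k + sz k"
  by (simp add: offs_def)

lemma offs_0[simp]: "offs sz 0 = 0"
  by (simp add: offs_def)

lemma offs_mono: "k \<le> k' \<Longrightarrow> offs sz k \<le> offs sz k'"
  unfolding offs_def by (rule sum_mono2) auto

lemma offs_unique:
  assumes "s < sz k" "s' < sz k'" "offs sz k + s = offs sz k' + s'"
  shows "k = k' \<and> s = s'"
proof -
  have *: False if "a < b" "s1 < sz a" "offs sz a + s1 = offs sz b + s2" for a b s1 s2
  proof -
    have "offs sz (Suc a) \<le> offs sz b" using that by (intro offs_mono) simp
    then show False using that by simp
  qed
  have "k = k'" using *[of k k' s s'] *[of k' k s' s] assms by (metis linorder_neqE_nat)
  then show ?thesis using assms by simp
qed

lemma offs_exists: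
  assumes "q < offs sz a"
  shows "\<exists>k<a. \<exists>s<sz k. q = offs sz k + s"
  using assms
proof (induction a)
  case 0 then show ?case by simp
next
  case (Suc a)
  show ?case
  proof (cases "q < offs sz a")
    case True then show ?thesis using Suc.IH by (meson less_SucI)
  next
    case False
    then have "q = offs sz a + (q - offs sz a)" "q - offs sz a < sz a" using Suc.prems by auto
    then show ?thesis by blast
  qed
qed

lemma prod_lessThan_add:
  fixes \<psi> :: "nat \<Rightarrow> 'c::comm_monoid_mult"
  shows "(\<Prod>q<x+y. \<psi> q) = (\<Prod>q<x. \<psi> q) * (\<Prod>s<y. \<psi> (x+s))"
  by (induction y) (simp_all add: mult.assoc)

lemma sum_lessThan_add:
  fixes \<psi> :: "nat \<Rightarrow> 'c::comm_monoid_add"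
  shows "(\<Sum>q<x+y. \<psi> q) = (\<Sum>q<x. \<psi> q) + (\<Sum>s<y. \<psi> (x+s))"
  by (induction y) (simp_all add: add.assoc)

lemma offs_prod:
  fixes \<psi> :: "nat \<Rightarrow> 'c::comm_monoid_mult"
  shows "(\<Prod>q<offs sz a. \<psi> q) = (\<Prod>k<a. \<Prod>s<sz k. \<psi> (offs sz k + s))"
  by (induction a) (simp_all add: prod_lessThan_add)

lemma offs_sum:
  fixes \<psi> :: "nat \<Rightarrow> 'c::comm_monoid_add"
  shows "(\<Sum>q<offs sz a. \<psi> q) = (\<Sum>k<a. \<Sum>s<sz k. \<psi> (offs sz k + s))"
  by (induction a) (simp_all add: sum_lessThan_add)

lemma sum_Suc_lt: "(\<Sum>l<d. Suc (f l)) = d + (\<Sum>l<d. f l)"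
  by (induction d) auto

lemma sum_Suc_le: "(\<Sum>l\<le>d. Suc (f l)) = Suc d + (\<Sum>l\<le>d. f l)"
  by (induction d) auto

lemma bpos_offs: "bpos \<alpha> i j = offs (\<lambda>l. Suc (\<alpha> l)) i + j"
  by (simp add: bpos_def offs_def)

lemma bpos_d0: "bpos \<alpha> d 0 = d + absm d \<alpha>"
  by (simp add: bpos_def absm_def sum_Suc_lt)

lemma bpos_less: "i < d \<Longrightarrow> k \<le> \<alpha> i \<Longrightarrow> bpos \<alpha> i k < d + absm d \<alpha>"
proof -
  assume a: "i < d" "k \<le> \<alpha> i"
  have "offs (\<lambda>l. Suc (\<alpha> l)) (Suc i) \<le> offs (\<lambda>l. Suc (\<alpha> l)) d" using a by (intro offs_mono) simp
  then show ?thesis using a by (simp add: bpos_offs flip: bpos_d0)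
qed

lemma bpos_inj:
  assumes "k \<le> \<alpha> i" "k' \<le> \<alpha> i'" "bpos \<alpha> i k = bpos \<alpha> i' k'"
  shows "i = i' \<and> k = k'"
  using offs_unique[of k "\<lambda>l. Suc (\<alpha> l)" i k' i'] assms by (simp add: bpos_offs)

definition offb :: "(nat \<Rightarrow> nat) \<Rightarrow> (nat \<Rightarrow> nat) \<Rightarrow> nat \<Rightarrow> nat \<Rightarrow> nat" where
  "offb \<alpha> \<beta> i = offs (\<lambda>k. Suc (\<beta> (bpos \<alpha> i k)))"

definition gam :: "(nat \<Rightarrow> nat) \<Rightarrow> (nat \<Rightarrow> nat) \<Rightarrow> nat \<Rightarrow> nat" where
  "gam \<alpha> \<beta> i = \<alpha> i + (\<Sum>k\<le>\<alpha> i. \<beta> (bpos \<alpha> i k))"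

lemma offb_top: "offb \<alpha> \<beta> i (Suc (\<alpha> i)) = Suc (gam \<alpha> \<beta> i)"
  unfolding offb_def offs_def gam_def
  by (simp add: sum_Suc_le lessThan_Suc_atMost)

lemma key_pos: "bpos \<beta> (bpos \<alpha> i k) r = bpos (gam \<alpha> \<beta>) i (offb \<alpha> \<beta> i k + r)"
proof -
  have "bpos \<beta> (bpos \<alpha> i k) r = offs (\<lambda>q. Suc (\<beta> q)) (offs (\<lambda>l. Suc (\<alpha> l)) i + k) + r"
    by (simp add: bpos_offs)
  also have "offs (\<lambda>q. Suc (\<beta> q)) (offs (\<lambda>l. Suc (\<alpha> l)) i + k)
      = offs (\<lambda>q. Suc (\<beta> q)) (offs (\<lambda>l. Suc (\<alpha> l)) i) + offb \<alpha> \<beta> i k"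
    unfolding offs_def[of "\<lambda>q. Suc (\<beta> q)"] offb_def
    by (simp add: sum_lessThan_add offs_def bpos_offs)
  also have "offs (\<lambda>q. Suc (\<beta> q)) (offs (\<lambda>l. Suc (\<alpha> l)) i) = (\<Sum>l<i. Suc (gam \<alpha> \<beta> l))"
    unfolding offs_def[of "\<lambda>q. Suc (\<beta> q)"] offs_sum
    by (simp add: offb_top[symmetric] offb_def offs_def bpos_offs)
  finally show ?thesis by (simp add: bpos_def)
qed

lemma dims: "(d + absm d \<alpha>) + absm (d + absm d \<alpha>) \<beta> = d + absm d (gam \<alpha> \<beta>)"
  using key_pos[of \<beta> \<alpha> d 0 0] by (simp add: bpos_d0 offb_def)

lemma absm_gam: "absm d (gam \<alpha> \<beta>) = absm d \<alpha> + absm (d + absm d \<alpha>) \<beta>"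
proof -
  have "absm (d + absm d \<alpha>) \<beta> = (\<Sum>p<offs (\<lambda>l. Suc (\<alpha> l)) d. \<beta> p)"
    using bpos_offs[of \<alpha> d 0] by (simp add: absm_def bpos_d0)
  also have "\<dots> = (\<Sum>l<d. \<Sum>k\<le>\<alpha> l. \<beta> (bpos \<alpha> l k))"
    by (simp add: offs_sum bpos_offs lessThan_Suc_atMost)
  finally show ?thesis by (simp add: absm_def gam_def sum.distrib)
qed



lemma invsum: fixes A B :: "'k::field" assumes "A \<noteq> 0" "B \<noteq> 0"
  shows "inverse A + inverse B = (B + A) * inverse A * inverse B"
proof -
  have "(B + A) * inverse A * inverse B = B * inverse B * inverse A + A * inverse A * inverse B"
    by (simp add: algebra_simps)
  then show ?thesis using assms by simp
qed
lemma pf_field0: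
  fixes x y t w :: "'k::field"
  assumes "x - y \<noteq> 0" "t - x \<noteq> 0" "t - y \<noteq> 0"
  shows "inverse (x - y) * w * inverse (t - x) = inverse (t - y) * (w * inverse (t - x) - w * inverse (y - x))"
proof -
  have e: "inverse (t - x) - inverse (y - x) = (t - y) * inverse (t - x) * inverse (x - y)"
  proof -
    have "inverse (y - x) = - inverse (x - y)" by (simp add: inverse_minus_eq[symmetric])
    moreover have "inverse (t - x) + inverse (x - y) = ((x - y) + (t - x)) * inverse (t - x) * inverse (x - y)"
      using assms invsum[of "t - x" "x - y"] by simp
    ultimately show ?thesis by simp
  qed
  have "inverse (t - y) * (w * inverse (t - x) - w * inverse (y - x)) = inverse (t - y) * (t - y) * w * inverse (t - x) * inverse (x - y)"
    by (simp add: right_diff_distrib[symmetric] e mult_ac)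
  then show ?thesis using assms by (simp add: mult_ac)
qed

lemma pf_field:
  fixes x y t w :: "'k::field"
  assumes "x \<noteq> y" "t \<noteq> x" "t \<noteq> y"
  shows "inverse (x - y) * w * inverse (t - x) = inverse (t - y) * (w * inverse (t - x) - w * inverse (y - x))"
  using pf_field0[of x y t w] assms by simp

lemma pf_identity:
  fixes \<tau> :: "'a \<Rightarrow> 'k::field"
  assumes "finite R" "R \<noteq> {}" "inj_on \<tau> R" "t \<notin> \<tau> ` R"
  shows "(\<Sum>s\<in>R. (\<Prod>r\<in>R-{s}. inverse (\<tau> s - \<tau> r)) * inverse (t - \<tau> s))
         = (\<Prod>s\<in>R. inverse (t - \<tau> s))"
  using assms(1,2,3,4)
proof (induction R arbitrary: t rule: finite_ne_induct)
  case (singleton a) then show ?case by simp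
next
  case (insert a R0)
  define w0 where "w0 s = (\<Prod>r\<in>R0-{s}. inverse (\<tau> s - \<tau> r))" for s
  have inj0: "inj_on \<tau> R0" using insert.prems by auto
  have ta: "\<tau> a \<notin> \<tau> ` R0" using insert.prems insert.hyps by auto
  have tt: "t \<notin> \<tau> ` R0" "t \<noteq> \<tau> a" using insert.prems by auto
  have IHt: "(\<Sum>s\<in>R0. w0 s * inverse (t - \<tau> s)) = (\<Prod>s\<in>R0. inverse (t - \<tau> s))"
    using insert.IH[OF inj0 tt(1)] by (simp add: w0_def)
  have IHa: "(\<Sum>s\<in>R0. w0 s * inverse (\<tau> a - \<tau> s)) = (\<Prod>s\<in>R0. inverse (\<tau> a - \<tau> s))"
    using insert.IH[OF inj0 ta] by (simp add: w0_def)
  have trm: "(\<Prod>r\<in>insert a R0-{s}. inverse (\<tau> s - \<tau> r)) * inverse (t - \<tau> s)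
      = inverse (t - \<tau> a) * (w0 s * inverse (t - \<tau> s) - w0 s * inverse (\<tau> a - \<tau> s))"
    if s: "s \<in> R0" for s
  proof -
    have "insert a R0 - {s} = insert a (R0 - {s})" using s insert.hyps by auto
    then have "(\<Prod>r\<in>insert a R0-{s}. inverse (\<tau> s - \<tau> r)) = inverse (\<tau> s - \<tau> a) * w0 s"
      using insert.hyps by (simp add: w0_def)
    moreover have "\<tau> s \<noteq> \<tau> a" using s ta by (metis image_eqI)
    moreover have "t \<noteq> \<tau> s" using s tt by auto
    ultimately show ?thesis using tt(2) pf_field[of "\<tau> s" "\<tau> a" t "w0 s"] by simp
  qed
  have "(\<Sum>s\<in>insert a R0. (\<Prod>r\<in>insert a R0-{s}. inverse (\<tau> s - \<tau> r)) * inverse (t - \<tau> s))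
      = (\<Prod>r\<in>R0. inverse (\<tau> a - \<tau> r)) * inverse (t - \<tau> a)
        + (\<Sum>s\<in>R0. inverse (t - \<tau> a) * (w0 s * inverse (t - \<tau> s) - w0 s * inverse (\<tau> a - \<tau> s)))"
    using insert.hyps trm by (simp add: insert_Diff_if)
  also have "\<dots> = (\<Prod>r\<in>R0. inverse (\<tau> a - \<tau> r)) * inverse (t - \<tau> a)
        + inverse (t - \<tau> a) * ((\<Prod>s\<in>R0. inverse (t - \<tau> s)) - (\<Prod>s\<in>R0. inverse (\<tau> a - \<tau> s)))"
    by (simp add: sum_distrib_left[symmetric] sum_subtractf IHt IHa)
  also have "\<dots> = (\<Prod>s\<in>insert a R0. inverse (t - \<tau> s))"
    using insert.hyps by (simp add: algebra_simps)
  finally show ?case .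
qed



lemma PS:
  fixes H :: "nat \<Rightarrow> nat \<Rightarrow> 'x \<Rightarrow> 'c::comm_semiring_1"
  assumes fin: "\<And>p. finite (A p)"
  shows "(\<Sum>x\<in>PiE {..<offs sz d} A. \<Prod>i<d. \<Prod>k<sz i. H i k (x (offs sz i + k)))
       = (\<Prod>i<d. \<Prod>k<sz i. \<Sum>a\<in>A (offs sz i + k). H i k a)"
proof -
  define H' where "H' p a = (\<Prod>i'<d. \<Prod>k'<sz i'. if offs sz i' + k' = p then H i' k' a else 1)" for p a
  have H'eq: "H' (offs sz i + k) a = H i k a" if ik: "i < d" "k < sz i" for i k a
  proof -
    have "H' (offs sz i + k) a = (\<Prod>i'<d. if i' = i then (\<Prod>k'<sz i. if k' = k then H i k a else 1) else 1)"
      unfolding H'_def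
    proof (rule prod.cong[OF refl])
      fix i' assume "i' \<in> {..<d}"
      show "(\<Prod>k'<sz i'. if offs sz i' + k' = offs sz i + k then H i' k' a else 1)
          = (if i' = i then (\<Prod>k'<sz i. if k' = k then H i k a else 1) else 1)"
      proof (cases "i' = i")
        case True then show ?thesis using offs_unique[of _ sz i _ i] ik by (auto intro!: prod.cong)
      next
        case False
        then have "\<And>k'. k' < sz i' \<Longrightarrow> offs sz i' + k' \<noteq> offs sz i + k"
          using offs_unique[of _ sz i' k i] ik by blast
        then show ?thesis using False by (simp add: prod.neutral)
      qed
    qed
    also have "\<dots> = H i k a" using ik by (simp add: prod.delta)
    finally show ?thesis .
  qed
  have "(\<Sum>x\<in>PiE {..<offs sz d} A. \<Prod>i<d. \<Prod>k<sz i. H i k (x (offs sz i + k)))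
      = (\<Sum>x\<in>PiE {..<offs sz d} A. \<Prod>p<offs sz d. H' p (x p))"
    by (intro sum.cong refl) (simp add: offs_prod H'eq)
  also have "\<dots> = (\<Prod>p<offs sz d. \<Sum>a\<in>A p. H' p a)"
    by (rule prod_sum_PiE[symmetric]) (auto simp: fin)
  also have "\<dots> = (\<Prod>i<d. \<Prod>k<sz i. \<Sum>a\<in>A (offs sz i + k). H i k a)"
    by (simp add: offs_prod H'eq)
  finally show ?thesis .
qed



definition Wt :: "nat \<Rightarrow> (nat \<Rightarrow> nat) \<Rightarrow> (nat \<Rightarrow> 'k::field) \<Rightarrow> (nat \<Rightarrow> nat) \<Rightarrow> 'k" where
  "Wt d \<alpha> x j = (\<Prod>l<d. \<Prod>k\<in>{..\<alpha> l} - {j l}. inverse (x (bpos \<alpha> l (j l)) - x (bpos \<alpha> l k)))"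

lemma ddiff_Wt: "ddiff smul d \<alpha> f x = (\<Sum>j\<in>idx d \<alpha>. smul (Wt d \<alpha> x j) (f (pick d \<alpha> x j)))"
  by (simp add: ddiff_def Wt_def)

definition compj :: "(nat \<Rightarrow> nat) \<Rightarrow> (nat \<Rightarrow> nat) \<Rightarrow> nat \<Rightarrow> (nat \<Rightarrow> nat) \<Rightarrow> (nat \<Rightarrow> nat) \<Rightarrow> nat \<Rightarrow> nat" where
  "compj \<alpha> \<beta> d j' j = restrict (\<lambda>i. offb \<alpha> \<beta> i (j i) + j' (bpos \<alpha> i (j i))) {..<d}"

lemma idx_iff: "j \<in> idx d \<alpha> \<longleftrightarrow> (\<forall>i<d. j i \<le> \<alpha> i) \<and> (\<forall>i. i \<ge> d \<longrightarrow> j i = undefined)"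
  by (auto simp: idx_def PiE_iff extensional_def)

lemma pick_comp:
  assumes "j \<in> idx d \<alpha>"
  shows "pick d \<alpha> (pick (d + absm d \<alpha>) \<beta> y j') j = pick d (gam \<alpha> \<beta>) y (compj \<alpha> \<beta> d j' j)"
proof
  fix i show "pick d \<alpha> (pick (d + absm d \<alpha>) \<beta> y j') j i = pick d (gam \<alpha> \<beta>) y (compj \<alpha> \<beta> d j' j) i"
  proof (cases "i < d")
    case True
    then have "bpos \<alpha> i (j i) < d + absm d \<alpha>" using assms by (intro bpos_less) (auto simp: idx_iff)
    then show ?thesis using True by (simp add: pick_def compj_def key_pos)
  qed (simp add: pick_def)
qed

lemma offb_bound:
  assumes "k \<le> \<alpha> i" "s \<le> \<beta> (bpos \<alpha> i k)"
  shows "offb \<alpha> \<beta> i k + s \<le> gam \<alpha> \<beta> i"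
proof -
  have "offb \<alpha> \<beta> i (Suc k) \<le> offb \<alpha> \<beta> i (Suc (\<alpha> i))"
    unfolding offb_def using assms by (intro offs_mono) simp
  moreover have "offb \<alpha> \<beta> i (Suc k) = offb \<alpha> \<beta> i k + Suc (\<beta> (bpos \<alpha> i k))"
    by (simp add: offb_def)
  ultimately show ?thesis using assms unfolding offb_top by simp
qed

lemma comp_idx:
  assumes "j \<in> idx d \<alpha>" "j' \<in> idx (d + absm d \<alpha>) \<beta>"
  shows "compj \<alpha> \<beta> d j' j \<in> idx d (gam \<alpha> \<beta>)"
proof -
  have "offb \<alpha> \<beta> i (j i) + j' (bpos \<alpha> i (j i)) \<le> gam \<alpha> \<beta> i" if "i < d" for i
  proof -
    have ji: "j i \<le> \<alpha> i" using assms that by (auto simp: idx_iff)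
    then have "bpos \<alpha> i (j i) < d + absm d \<alpha>" using that by (intro bpos_less)
    then have "j' (bpos \<alpha> i (j i)) \<le> \<beta> (bpos \<alpha> i (j i))" using assms by (auto simp: idx_iff)
    then show ?thesis using ji by (intro offb_bound)
  qed
  then show ?thesis by (auto simp: idx_iff compj_def)
qed

lemma prod_minus_if:
  fixes \<phi> :: "'a \<Rightarrow> 'c::comm_monoid_mult"
  assumes "finite A" "a \<in> A"
  shows "(\<Prod>x\<in>A-{a}. \<phi> x) = (\<Prod>x\<in>A. if x = a then 1 else \<phi> x)"
proof -
  have "(\<Prod>x\<in>A. if x = a then 1 else \<phi> x) = (\<Prod>x\<in>A-{a}. if x = a then 1 else \<phi> x)"
    using assms by (simp add: prod.remove)
  also have "\<dots> = (\<Prod>x\<in>A-{a}. \<phi> x)" by (intro prod.cong) auto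
  finally show ?thesis by simp
qed



lemma fiber_coef:
  fixes y :: "nat \<Rightarrow> 'k::field"
  assumes inj: "inj_on y {..<d + absm d (gam \<alpha> \<beta>)}"
    and m: "m \<in> idx d (gam \<alpha> \<beta>)"
  shows "(\<Sum>x\<in>{x. x \<in> idx (d + absm d \<alpha>) \<beta> \<times> idx d \<alpha> \<and> compj \<alpha> \<beta> d (fst x) (snd x) = m}.
           Wt (d + absm d \<alpha>) \<beta> y (fst x) * Wt d \<alpha> (pick (d + absm d \<alpha>) \<beta> y (fst x)) (snd x))
         = Wt d (gam \<alpha> \<beta>) y m"
proof -
  define n where "n = d + absm d \<alpha>"
  define \<gamma> where "\<gamma> = gam \<alpha> \<beta>"
  define szb where "szb = (\<lambda>i k. Suc (\<beta> (bpos \<alpha> i k)))"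
  define sza where "sza = (\<lambda>l. Suc (\<alpha> l))"
  have offb_szb: "offb \<alpha> \<beta> i = offs (szb i)" for i by (simp add: offb_def szb_def)
  have n_offs: "n = offs sza d" using bpos_offs[of \<alpha> d 0] by (simp add: n_def bpos_d0 sza_def)
  have bpos_sza: "bpos \<alpha> i k = offs sza i + k" for i k by (simp add: bpos_offs sza_def)
  have "\<forall>i\<in>{..<d}. \<exists>ks. fst ks < Suc (\<alpha> i) \<and> snd ks < szb i (fst ks) \<and> m i = offb \<alpha> \<beta> i (fst ks) + snd ks"
  proof
    fix i assume i: "i \<in> {..<d}"
    have "m i < offs (szb i) (Suc (\<alpha> i))"
      using m i offb_top[of \<alpha> \<beta> i] by (auto simp: idx_iff offb_szb)
    from offs_exists[OF this] obtain k s where "k < Suc (\<alpha> i)" "s < szb i k" "m i = offs (szb i) k + s" by blast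
    then show "\<exists>ks. fst ks < Suc (\<alpha> i) \<and> snd ks < szb i (fst ks) \<and> m i = offb \<alpha> \<beta> i (fst ks) + snd ks"
      by (intro exI[of _ "(k, s)"]) (simp add: offb_szb)
  qed
  then obtain h where h: "\<And>i. i < d \<Longrightarrow> fst (h i) < Suc (\<alpha> i) \<and> snd (h i) < szb i (fst (h i))
      \<and> m i = offb \<alpha> \<beta> i (fst (h i)) + snd (h i)"
    by (metis bchoice lessThan_iff)
  define g where "g = restrict (\<lambda>i. fst (h i)) {..<d}"
  define u where "u = restrict (\<lambda>i. snd (h i)) {..<d}"
  have gi: "g i \<le> \<alpha> i" and ui: "u i \<le> \<beta> (bpos \<alpha> i (g i))" and mi: "m i = offb \<alpha> \<beta> i (g i) + u i"
    if "i < d" for i using h[OF that] that by (auto simp: g_def u_def szb_def)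
  have g_idx: "g \<in> idx d \<alpha>" using gi by (auto simp: idx_iff g_def)
  have bl: "bpos \<alpha> i k < n" if "i < d" "k \<le> \<alpha> i" for i k using bpos_less[of i d k \<alpha>] that by (simp add: n_def)
  define F where "F = {j'\<in>idx n \<beta>. \<forall>i<d. j' (bpos \<alpha> i (g i)) = u i}"
  have fiber: "{x. x \<in> idx n \<beta> \<times> idx d \<alpha> \<and> compj \<alpha> \<beta> d (fst x) (snd x) = m} = F \<times> {g}"
  proof (rule set_eqI)
    fix x :: "(nat \<Rightarrow> nat) \<times> (nat \<Rightarrow> nat)"
    obtain j' j where x: "x = (j', j)" by (cases x)
    show "x \<in> {x. x \<in> idx n \<beta> \<times> idx d \<alpha> \<and> compj \<alpha> \<beta> d (fst x) (snd x) = m} \<longleftrightarrow> x \<in> F \<times> {g}"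
    proof
      assume "x \<in> {x. x \<in> idx n \<beta> \<times> idx d \<alpha> \<and> compj \<alpha> \<beta> d (fst x) (snd x) = m}"
      then have j': "j' \<in> idx n \<beta>" and j: "j \<in> idx d \<alpha>" and c: "compj \<alpha> \<beta> d j' j = m" by (auto simp: x)
      have both: "j i = g i \<and> j' (bpos \<alpha> i (g i)) = u i" if i: "i < d" for i
      proof -
        have ji: "j i \<le> \<alpha> i" using j i by (auto simp: idx_iff)
        have "j' (bpos \<alpha> i (j i)) \<le> \<beta> (bpos \<alpha> i (j i))" using j' bl[OF i ji] by (auto simp: idx_iff)
        moreover have "offs (szb i) (j i) + j' (bpos \<alpha> i (j i)) = offs (szb i) (g i) + u i"
          using c mi[OF i] i by (auto simp: compj_def offb_szb dest: fun_cong[of _ _ i])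
        moreover have "u i < szb i (g i)" using ui[OF i] by (simp add: szb_def)
        ultimately show ?thesis using offs_unique[of "j' (bpos \<alpha> i (j i))" "szb i" "j i" "u i" "g i"]
          by (auto simp: szb_def)
      qed
      have "j = g"
      proof
        fix i show "j i = g i" using both j by (cases "i < d") (auto simp: idx_iff g_def)
      qed
      then show "x \<in> F \<times> {g}" using both j' by (auto simp: x F_def)
    next
      assume "x \<in> F \<times> {g}"
      then have j': "j' \<in> idx n \<beta>" and jg: "j = g" and uu: "\<And>i. i < d \<Longrightarrow> j' (bpos \<alpha> i (g i)) = u i"
        by (auto simp: x F_def)
      have "compj \<alpha> \<beta> d j' g = m"
      proof
        fix i show "compj \<alpha> \<beta> d j' g i = m i"
          using m uu mi by (cases "i < d") (auto simp: compj_def idx_iff)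
      qed
      then show "x \<in> {x. x \<in> idx n \<beta> \<times> idx d \<alpha> \<and> compj \<alpha> \<beta> d (fst x) (snd x) = m}"
        using j' g_idx jg by (simp add: x)
    qed
  qed
  define T where "T i k s = y (bpos \<beta> (bpos \<alpha> i k) s)" for i k s
  define t where "t i = T i (g i) (u i)" for i
  define wb where "wb i k s = (\<Prod>r\<in>{..\<beta> (bpos \<alpha> i k)} - {s}. inverse (T i k s - T i k r))" for i k s
  define H where "H i k s = wb i k s * (if k = g i then 1 else inverse (t i - T i k s))" for i k s
  define B where "B p = {r. r \<le> \<beta> p \<and> (\<forall>i<d. p = bpos \<alpha> i (g i) \<longrightarrow> r = u i)}" for p
  have T_alt: "T i k s = y (bpos \<gamma> i (offb \<alpha> \<beta> i k + s))" for i k s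
    by (simp add: T_def key_pos \<gamma>_def)
  have Tpos: "bpos \<gamma> i (offb \<alpha> \<beta> i k + s) < d + absm d (gam \<alpha> \<beta>)"
    if "i < d" "k \<le> \<alpha> i" "s \<le> \<beta> (bpos \<alpha> i k)" for i k s
    using bpos_less[of i d "offb \<alpha> \<beta> i k + s" \<gamma>] offb_bound[of k \<alpha> i s \<beta>] that by (simp add: \<gamma>_def)
  have Tinj: "k = k' \<and> s = s'" if "i < d" "k \<le> \<alpha> i" "s \<le> \<beta> (bpos \<alpha> i k)"
    "k' \<le> \<alpha> i" "s' \<le> \<beta> (bpos \<alpha> i k')" "T i k s = T i k' s'" for i k s k' s'
  proof -
    have "bpos \<gamma> i (offb \<alpha> \<beta> i k + s) = bpos \<gamma> i (offb \<alpha> \<beta> i k' + s')"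
      using inj_onD[OF inj, of "bpos \<gamma> i (offb \<alpha> \<beta> i k + s)" "bpos \<gamma> i (offb \<alpha> \<beta> i k' + s')"]
        Tpos[of i k s] Tpos[of i k' s'] that by (simp add: T_alt)
    then have "offs (szb i) k + s = offs (szb i) k' + s'" by (simp add: bpos_def offb_szb)
    then show ?thesis using offs_unique[of s "szb i" k s' k'] that by (simp add: szb_def)
  qed
  have step_a: "(\<Sum>x\<in>{x. x \<in> idx n \<beta> \<times> idx d \<alpha> \<and> compj \<alpha> \<beta> d (fst x) (snd x) = m}.
           Wt n \<beta> y (fst x) * Wt d \<alpha> (pick n \<beta> y (fst x)) (snd x))
      = (\<Sum>j'\<in>F. Wt n \<beta> y j' * Wt d \<alpha> (pick n \<beta> y j') g)"
  proof -
    have "F \<times> {g} = (\<lambda>j'. (j', g)) ` F" by auto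
    then show ?thesis unfolding fiber by (simp add: sum.reindex inj_on_def)
  qed
  have step_b: "F = PiE {..<n} B"
  proof (rule set_eqI)
    fix j'
    show "j' \<in> F \<longleftrightarrow> j' \<in> PiE {..<n} B"
    proof
      assume "j' \<in> F" then show "j' \<in> PiE {..<n} B"
        by (auto simp: F_def B_def idx_def PiE_iff)
    next
      assume a: "j' \<in> PiE {..<n} B"
      have "j' (bpos \<alpha> i (g i)) = u i" if "i < d" for i
        using a bl[OF that gi[OF that]] that by (auto simp: B_def PiE_iff)
      then show "j' \<in> F" using a by (auto simp: F_def B_def idx_def PiE_iff)
    qed
  qed
  have step_c: "Wt n \<beta> y j' * Wt d \<alpha> (pick n \<beta> y j') g = (\<Prod>i<d. \<Prod>k<sza i. H i k (j' (offs sza i + k)))"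
    if j': "j' \<in> F" for j'
  proof -
    have "Wt n \<beta> y j' = (\<Prod>i<d. \<Prod>k<sza i. wb i k (j' (offs sza i + k)))"
      unfolding Wt_def n_offs offs_prod by (simp add: wb_def T_def bpos_sza)
    moreover have "Wt d \<alpha> (pick n \<beta> y j') g
        = (\<Prod>i<d. \<Prod>k<sza i. if k = g i then 1 else inverse (t i - T i k (j' (offs sza i + k))))"
      unfolding Wt_def
    proof (rule prod.cong[OF refl])
      fix i assume i: "i \<in> {..<d}"
      have "(\<Prod>k\<in>{..\<alpha> i} - {g i}. inverse (pick n \<beta> y j' (bpos \<alpha> i (g i)) - pick n \<beta> y j' (bpos \<alpha> i k)))
          = (\<Prod>k\<in>{..\<alpha> i} - {g i}. inverse (t i - T i k (j' (offs sza i + k))))"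
        using i bl gi j' by (intro prod.cong refl) (auto simp: pick_def t_def T_def F_def bpos_sza)
      also have "\<dots> = (\<Prod>k<sza i. if k = g i then 1 else inverse (t i - T i k (j' (offs sza i + k))))"
        using gi i by (subst prod_minus_if) (auto simp: sza_def lessThan_Suc_atMost)
      finally show "(\<Prod>k\<in>{..\<alpha> i} - {g i}. inverse (pick n \<beta> y j' (bpos \<alpha> i (g i)) - pick n \<beta> y j' (bpos \<alpha> i k)))
          = (\<Prod>k<sza i. if k = g i then 1 else inverse (t i - T i k (j' (offs sza i + k))))" .
    qed
    ultimately show ?thesis by (simp add: H_def prod.distrib)
  qed
  have step_d: "(\<Sum>j'\<in>F. Wt n \<beta> y j' * Wt d \<alpha> (pick n \<beta> y j') g)
      = (\<Prod>i<d. \<Prod>k<sza i. \<Sum>a\<in>B (offs sza i + k). H i k a)"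
  proof -
    have "(\<Sum>j'\<in>F. Wt n \<beta> y j' * Wt d \<alpha> (pick n \<beta> y j') g)
        = (\<Sum>j'\<in>PiE {..<offs sza d} B. \<Prod>i<d. \<Prod>k<sza i. H i k (j' (offs sza i + k)))"
      using step_c unfolding step_b n_offs[symmetric] by (intro sum.cong refl) (simp add: step_b)
    also have "\<dots> = (\<Prod>i<d. \<Prod>k<sza i. \<Sum>a\<in>B (offs sza i + k). H i k a)"
      by (rule PS) (simp add: B_def)
    finally show ?thesis .
  qed
  have step_e: "(\<Prod>k<sza i. \<Sum>a\<in>B (offs sza i + k). H i k a)
      = (\<Prod>q\<in>{..\<gamma> i} - {m i}. inverse (y (bpos \<gamma> i (m i)) - y (bpos \<gamma> i q)))"
    if i: "i < d" for i
  proof -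
    have sumk: "(\<Sum>a\<in>B (offs sza i + k). H i k a)
        = (if k = g i then wb i (g i) (u i) else (\<Prod>s\<in>{..\<beta> (bpos \<alpha> i k)}. inverse (t i - T i k s)))"
      if k: "k < sza i" for k
    proof -
      have kle: "k \<le> \<alpha> i" using k by (simp add: sza_def)
      have Bk: "B (offs sza i + k) = (if k = g i then {u i} else {..\<beta> (bpos \<alpha> i k)})"
      proof -
        have eqv: "(bpos \<alpha> i k = bpos \<alpha> i' (g i')) \<longleftrightarrow> (i' = i \<and> k = g i)" if "i' < d" for i'
          using bpos_inj[of k \<alpha> i "g i'" i'] kle gi[OF that] by auto
        show ?thesis using ui[OF i] eqv i unfolding bpos_sza[symmetric] B_def by auto
      qed
      show ?thesis
      proof (cases "k = g i")
        case True then show ?thesis using Bk by (simp add: H_def)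
      next
        case False
        have injT: "inj_on (T i k) {..\<beta> (bpos \<alpha> i k)}"
          using Tinj[OF i kle _ kle] by (auto simp: inj_on_def)
        have tnot: "t i \<notin> T i k ` {..\<beta> (bpos \<alpha> i k)}"
          using Tinj[OF i gi[OF i] ui[OF i] kle] False by (auto simp: t_def)
        have "(\<Sum>a\<in>B (offs sza i + k). H i k a)
            = (\<Sum>s\<in>{..\<beta> (bpos \<alpha> i k)}. (\<Prod>r\<in>{..\<beta> (bpos \<alpha> i k)} - {s}. inverse (T i k s - T i k r)) * inverse (t i - T i k s))"
          using Bk False by (simp add: H_def wb_def)
        also have "\<dots> = (\<Prod>s\<in>{..\<beta> (bpos \<alpha> i k)}. inverse (t i - T i k s))"
          by (rule pf_identity[OF _ _ injT tnot]) auto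
        finally show ?thesis using False by simp
      qed
    qed
    have ym: "y (bpos \<gamma> i (m i)) = t i" using mi[OF i] by (simp add: t_def T_alt)
    have mle: "m i \<le> \<gamma> i" using m i by (auto simp: idx_iff \<gamma>_def)
    have top: "Suc (\<gamma> i) = offs (szb i) (sza i)" using offb_top[of \<alpha> \<beta> i] by (simp add: \<gamma>_def offb_szb sza_def)
    have "(\<Prod>q\<in>{..\<gamma> i} - {m i}. inverse (y (bpos \<gamma> i (m i)) - y (bpos \<gamma> i q)))
        = (\<Prod>q<Suc (\<gamma> i). if q = m i then 1 else inverse (t i - y (bpos \<gamma> i q)))"
      unfolding ym using mle by (subst prod_minus_if) (auto simp: lessThan_Suc_atMost)
    also have "\<dots> = (\<Prod>k<sza i. \<Prod>s<szb i k. if offs (szb i) k + s = m i then 1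
           else inverse (t i - y (bpos \<gamma> i (offs (szb i) k + s))))"
      unfolding top offs_prod ..
    also have "\<dots> = (\<Prod>k<sza i. \<Sum>a\<in>B (offs sza i + k). H i k a)"
    proof (rule prod.cong[OF refl])
      fix k assume "k \<in> {..<sza i}"
      then have k: "k < sza i" by simp
      have cond: "offs (szb i) k + s = m i \<longleftrightarrow> k = g i \<and> s = u i" if "s < szb i k" for s
        using offs_unique[of s "szb i" k "u i" "g i"] that ui[OF i] mi[OF i] by (auto simp: szb_def offb_szb)
      have Ty: "y (bpos \<gamma> i (offs (szb i) k + s)) = T i k s" for s by (simp add: T_alt offb_szb)
      show "(\<Prod>s<szb i k. if offs (szb i) k + s = m i then 1 else inverse (t i - y (bpos \<gamma> i (offs (szb i) k + s))))
          = (\<Sum>a\<in>B (offs sza i + k). H i k a)"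
      proof (cases "k = g i")
        case True
        have "(\<Prod>s<szb i k. if offs (szb i) k + s = m i then 1 else inverse (t i - y (bpos \<gamma> i (offs (szb i) k + s))))
            = (\<Prod>s\<in>{..\<beta> (bpos \<alpha> i (g i))}. if s = u i then 1 else inverse (t i - T i (g i) s))"
          using True cond Ty by (intro prod.cong) (auto simp: szb_def lessThan_Suc_atMost)
        also have "\<dots> = wb i (g i) (u i)"
          using ui[OF i] by (subst prod_minus_if[symmetric]) (auto simp: wb_def t_def)
        finally show ?thesis using sumk[OF k] True by simp
      next
        case False
        have "(\<Prod>s<szb i k. if offs (szb i) k + s = m i then 1 else inverse (t i - y (bpos \<gamma> i (offs (szb i) k + s))))
            = (\<Prod>s\<in>{..\<beta> (bpos \<alpha> i k)}. inverse (t i - T i k s))"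
          using False cond Ty by (intro prod.cong) (auto simp: szb_def lessThan_Suc_atMost)
        then show ?thesis using sumk[OF k] False by simp
      qed
    qed
    finally show ?thesis by simp
  qed
  show ?thesis
    unfolding n_def[symmetric] \<gamma>_def[symmetric] step_a step_d
    by (simp add: Wt_def step_e)
qed



lemma ddiff_comp:
  fixes smul :: "'k::field \<Rightarrow> 'f::ab_group_add \<Rightarrow> 'f"
  assumes vs: "vector_space smul"
    and inj: "inj_on y {..<d + absm d (gam \<alpha> \<beta>)}"
    and G: "\<And>j'. j' \<in> idx (d + absm d \<alpha>) \<beta> \<Longrightarrow>
        G (pick (d + absm d \<alpha>) \<beta> y j') = ddiff smul d \<alpha> f (pick (d + absm d \<alpha>) \<beta> y j')"
  shows "ddiff smul (d + absm d \<alpha>) \<beta> G y = ddiff smul d (gam \<alpha> \<beta>) f y"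
proof -
  interpret vector_space smul by fact
  define n where "n = d + absm d \<alpha>"
  define \<gamma> where "\<gamma> = gam \<alpha> \<beta>"
  define X where "X x = smul (Wt n \<beta> y (fst x) * Wt d \<alpha> (pick n \<beta> y (fst x)) (snd x))
       (f (pick d \<gamma> y (compj \<alpha> \<beta> d (fst x) (snd x))))" for x
  define S where "S = idx n \<beta> \<times> idx d \<alpha>"
  have finS: "finite S" by (simp add: S_def idx_def finite_PiE)
  have 1: "ddiff smul n \<beta> G y = (\<Sum>x\<in>S. X x)"
  proof -
    have "ddiff smul n \<beta> G y = (\<Sum>j'\<in>idx n \<beta>. \<Sum>j\<in>idx d \<alpha>. X (j', j))"
      unfolding ddiff_Wt
    proof (rule sum.cong[OF refl])
      fix j' assume j': "j' \<in> idx n \<beta>"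
      have "smul (Wt n \<beta> y j') (G (pick n \<beta> y j'))
          = smul (Wt n \<beta> y j') (\<Sum>j\<in>idx d \<alpha>. smul (Wt d \<alpha> (pick n \<beta> y j') j) (f (pick d \<alpha> (pick n \<beta> y j') j)))"
        using G[of j'] j' by (simp add: n_def ddiff_Wt)
      also have "\<dots> = (\<Sum>j\<in>idx d \<alpha>. X (j', j))"
        unfolding scale_sum_right X_def
        by (intro sum.cong refl) (simp add: n_def pick_comp \<gamma>_def)
      finally show "smul (Wt n \<beta> y j') (G (pick n \<beta> y j')) = (\<Sum>j\<in>idx d \<alpha>. X (j', j))" .
    qed
    also have "\<dots> = (\<Sum>x\<in>S. X x)"
      unfolding S_def by (simp add: sum.cartesian_product)
    finally show ?thesis .
  qed
  have 2: "(\<Sum>x\<in>S. X x) = (\<Sum>m\<in>idx d \<gamma>. \<Sum>x\<in>{x. x \<in> S \<and> compj \<alpha> \<beta> d (fst x) (snd x) = m}. X x)"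
  proof (rule sum.group[symmetric])
    show "finite (idx d \<gamma>)" by (simp add: idx_def finite_PiE)
    show "(\<lambda>x. compj \<alpha> \<beta> d (fst x) (snd x)) ` S \<subseteq> idx d \<gamma>"
      using comp_idx unfolding S_def \<gamma>_def n_def by fastforce
  qed (rule finS)
  have 3: "(\<Sum>x\<in>{x. x \<in> S \<and> compj \<alpha> \<beta> d (fst x) (snd x) = m}. X x) = smul (Wt d \<gamma> y m) (f (pick d \<gamma> y m))"
    if m: "m \<in> idx d \<gamma>" for m
  proof -
    have "(\<Sum>x\<in>{x. x \<in> S \<and> compj \<alpha> \<beta> d (fst x) (snd x) = m}. X x)
       = (\<Sum>x\<in>{x. x \<in> S \<and> compj \<alpha> \<beta> d (fst x) (snd x) = m}.
            smul (Wt n \<beta> y (fst x) * Wt d \<alpha> (pick n \<beta> y (fst x)) (snd x)) (f (pick d \<gamma> y m)))"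
      by (intro sum.cong refl) (simp add: X_def)
    also have "\<dots> = smul (\<Sum>x\<in>{x. x \<in> S \<and> compj \<alpha> \<beta> d (fst x) (snd x) = m}.
            Wt n \<beta> y (fst x) * Wt d \<alpha> (pick n \<beta> y (fst x)) (snd x)) (f (pick d \<gamma> y m))"
      by (simp add: scale_sum_left)
    also have "\<dots> = smul (Wt d \<gamma> y m) (f (pick d \<gamma> y m))"
      using fiber_coef[OF inj m[unfolded \<gamma>_def]] by (simp add: S_def n_def \<gamma>_def)
    finally show ?thesis .
  qed
  show ?thesis
    unfolding n_def[symmetric] \<gamma>_def[symmetric] 1 2 ddiff_Wt[of _ _ \<gamma>]
    by (intro sum.cong refl 3)
qed



lemma open_infinite:
  assumes tf: "top_field TYPE('k::{field,t2_space})" and S: "open (S::'k set)" "S \<noteq> {}"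
  shows "infinite S"
proof
  assume fin: "finite S"
  obtain a where a: "a \<in> S" using S by auto
  have "open (S - (S - {a}))" using fin S by (intro open_Diff finite_imp_closed) auto
  moreover have "S - (S - {a}) = {a}" using a by auto
  ultimately have oa: "open {a}" by simp
  have c1: "continuous_on UNIV (\<lambda>x::'k. (x, a))" by (intro continuous_intros)
  have c2: "continuous_on UNIV (\<lambda>p::'k\<times>'k. fst p + snd p)" using tf by (simp add: top_field_def)
  have "continuous_on UNIV ((\<lambda>p::'k\<times>'k. fst p + snd p) \<circ> (\<lambda>x. (x, a)))"
    by (rule continuous_on_compose[OF c1 continuous_on_subset[OF c2]]) simp
  then have "continuous_on UNIV (\<lambda>x::'k. x + a)" by (simp add: o_def)
  then have "open ((\<lambda>x::'k. x + a) -` {a})" using oa by (intro open_vimage)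
  moreover have "(\<lambda>x::'k. x + a) -` {a} = {0}" by auto
  ultimately show False using tf by (simp add: top_field_def)
qed

lemma choose_inj:
  assumes "finite I" "\<And>i. i \<in> I \<Longrightarrow> infinite (S i)"
  shows "\<exists>z\<in>PiE I S. inj_on z I"
  using assms
proof (induction I rule: finite_induct)
  case empty then show ?case by auto
next
  case (insert a I)
  then obtain z where z: "z \<in> PiE I S" "inj_on z I" by auto
  have "infinite (S a - z ` I)" using insert by (simp add: Diff_infinite_finite)
  then obtain v where v: "v \<in> S a" "v \<notin> z ` I" by (metis Diff_iff finite.emptyI ex_in_conv)
  define z' where "z' = z(a := v)"
  have "z' \<in> PiE (insert a I) S" using z v insert.hyps by (auto simp: z'_def PiE_iff extensional_def)
  moreover have "inj_on z' (insert a I)"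
  proof -
    have "inj_on z' I" using z insert.hyps by (auto simp: z'_def inj_on_def)
    moreover have "z' a \<notin> z' ` I" using v insert.hyps by (auto simp: z'_def)
    ultimately show ?thesis using insert.hyps by simp
  qed
  ultimately show ?case by blast
qed

lemma topspace_Kn: "topspace (Kn n) = PiE {..<n} (\<lambda>_. UNIV)"
  by (simp add: Kn_def)

lemma box_choice:
  assumes "openin (Kn N) W" "y \<in> W"
  shows "\<exists>V. (\<forall>p<N. open (V p) \<and> y p \<in> V p) \<and> PiE {..<N} V \<subseteq> W"
proof -
  have "\<forall>x\<in>W. \<exists>U. finite {i \<in> {..<N}. U i \<noteq> topspace euclidean} \<and>
                 (\<forall>i \<in> {..<N}. openin euclidean (U i)) \<and> x \<in> Pi\<^sub>E {..<N} U \<and> Pi\<^sub>E {..<N} U \<subseteq> W"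
    using assms(1) unfolding Kn_def openin_product_topology_alt .
  then obtain V where V: "\<forall>i\<in>{..<N}. openin euclidean (V i)" "y \<in> PiE {..<N} V" "PiE {..<N} V \<subseteq> W"
    using assms(2) by meson
  have "\<forall>p<N. open (V p) \<and> y p \<in> V p" using V(1,2) unfolding PiE_iff by simp
  then show ?thesis using V(3) by blast
qed

lemma idx_nonempty: "restrict (\<lambda>_. 0) {..<d} \<in> idx d \<alpha>"
  by (simp add: idx_def)

lemma continuous_pick:
  assumes "j \<in> idx d \<alpha>"
  shows "continuous_map (Kn (d + absm d \<alpha>)) (Kn d) (\<lambda>x. pick d \<alpha> x j)"
  unfolding Kn_def continuous_map_componentwise
proof (intro conjI ballI)
  show "(\<lambda>x. pick d \<alpha> x j) ` topspace (product_topology (\<lambda>_. euclidean) {..<d + absm d \<alpha>}) \<subseteq> extensional {..<d}"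
    by (auto simp: pick_def)
  fix i assume i: "i \<in> {..<d}"
  then have b: "bpos \<alpha> i (j i) \<in> {..<d + absm d \<alpha>}" using assms by (auto simp: idx_iff intro: bpos_less)
  have "continuous_map (product_topology (\<lambda>_. euclidean) {..<d + absm d \<alpha>}) euclidean (\<lambda>x. x (bpos \<alpha> i (j i)))"
    using continuous_map_product_projection[OF b, of "\<lambda>_. euclidean"] by simp
  then show "continuous_map (product_topology (\<lambda>_. euclidean) {..<d + absm d \<alpha>}) euclidean (\<lambda>x. pick d \<alpha> x j i)"
    using i by (simp add: pick_def)
qed

lemma openin_Ulow:
  assumes "openin (Kn d) U"
  shows "openin (Kn (d + absm d \<alpha>)) (Ulow d U \<alpha>)"
proof -
  have "Ulow d U \<alpha> = \<Inter>((\<lambda>j. {x \<in> topspace (Kn (d + absm d \<alpha>)). pick d \<alpha> x j \<in> U}) ` idx d \<alpha>)"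
    unfolding Ulow_def using idx_nonempty[of d \<alpha>] by blast
  also have "openin (Kn (d + absm d \<alpha>)) \<dots>"
  proof (rule openin_Inter)
    show "finite ((\<lambda>j. {x \<in> topspace (Kn (d + absm d \<alpha>)). pick d \<alpha> x j \<in> U}) ` idx d \<alpha>)"
      by (intro finite_imageI) (simp add: idx_def finite_PiE)
    show "(\<lambda>j. {x \<in> topspace (Kn (d + absm d \<alpha>)). pick d \<alpha> x j \<in> U}) ` idx d \<alpha> \<noteq> {}"
      using idx_nonempty[of d \<alpha>] by blast
    fix X assume "X \<in> (\<lambda>j. {x \<in> topspace (Kn (d + absm d \<alpha>)). pick d \<alpha> x j \<in> U}) ` idx d \<alpha>"
    then obtain j where j: "j \<in> idx d \<alpha>" and X: "X = {x \<in> topspace (Kn (d + absm d \<alpha>)). pick d \<alpha> x j \<in> U}" by blast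
    show "openin (Kn (d + absm d \<alpha>)) X"
      unfolding X by (rule openin_continuous_map_preimage[OF continuous_pick[OF j] assms])
  qed
  finally show ?thesis .
qed

lemma Ulow_prod:
  assumes "U = PiE {..<d} Us"
  shows "x \<in> Ulow d U \<gamma> \<longleftrightarrow> x \<in> topspace (Kn (d + absm d \<gamma>)) \<and> (\<forall>i<d. \<forall>k\<le>\<gamma> i. x (bpos \<gamma> i k) \<in> Us i)"
proof -
  have "(\<forall>j\<in>idx d \<gamma>. pick d \<gamma> x j \<in> U) \<longleftrightarrow> (\<forall>i<d. \<forall>k\<le>\<gamma> i. x (bpos \<gamma> i k) \<in> Us i)"
  proof
    assume a: "\<forall>j\<in>idx d \<gamma>. pick d \<gamma> x j \<in> U"
    show "\<forall>i<d. \<forall>k\<le>\<gamma> i. x (bpos \<gamma> i k) \<in> Us i"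
    proof (intro allI impI)
      fix i k assume ik: "i < d" "k \<le> \<gamma> i"
      define j where "j = restrict (\<lambda>l. if l = i then k else 0) {..<d}"
      have "j \<in> idx d \<gamma>" using ik by (auto simp: j_def idx_def)
      then have "pick d \<gamma> x j \<in> U" using a by auto
      then have "pick d \<gamma> x j i \<in> Us i" using ik assms by (auto simp: PiE_iff)
      then show "x (bpos \<gamma> i k) \<in> Us i" using ik by (simp add: pick_def j_def)
    qed
  next
    assume a: "\<forall>i<d. \<forall>k\<le>\<gamma> i. x (bpos \<gamma> i k) \<in> Us i"
    show "\<forall>j\<in>idx d \<gamma>. pick d \<gamma> x j \<in> U" using a assms by (auto simp: pick_def idx_iff PiE_iff)
  qed
  then show ?thesis by (simp add: Ulow_def)
qed



lemma dense_inj: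
  assumes tf: "top_field TYPE('k::{field,t2_space})"
    and adm: "admissible_domain d (U :: (nat \<Rightarrow> 'k) set)"
    and y: "y \<in> Ulow d U \<gamma>" and Ob: "openin (Kn (d + absm d \<gamma>)) Ob" and yO: "y \<in> Ob"
  shows "\<exists>z\<in>Ob. z \<in> Ulow d U \<gamma> \<and> inj_on z {..<d + absm d \<gamma>}"
proof -
  define N where "N = d + absm d \<gamma>"
  from adm consider (op) "openin (Kn d) U"
    | (pr) Us where "U = PiE {..<d} Us" "\<And>i. i < d \<Longrightarrow> Us i \<subseteq> closure (interior (Us i))"
    unfolding admissible_domain_def by blast
  then show ?thesis
  proof cases
    case op
    have W: "openin (Kn N) (Ob \<inter> Ulow d U \<gamma>)" using Ob openin_Ulow[OF op, of \<gamma>] by (simp add: N_def openin_Int)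
    obtain V where V: "\<forall>p<N. open (V p) \<and> y p \<in> V p" "PiE {..<N} V \<subseteq> Ob \<inter> Ulow d U \<gamma>"
      using box_choice[OF W] y yO by blast
    have "\<exists>z\<in>PiE {..<N} V. inj_on z {..<N}"
    proof (rule choose_inj)
      fix p assume "p \<in> {..<N}"
      then have "open (V p)" "V p \<noteq> {}" using V(1) by auto
      then show "infinite (V p)" by (rule open_infinite[OF tf])
    qed simp
    then show ?thesis using V(2) by (auto simp: N_def)
  next
    case pr
    obtain V where V: "\<forall>p<N. open (V p) \<and> y p \<in> V p" "PiE {..<N} V \<subseteq> Ob"
      using box_choice[OF Ob[folded N_def] yO] by blast
    have yU: "\<forall>i<d. \<forall>k\<le>\<gamma> i. y (bpos \<gamma> i k) \<in> Us i" using y Ulow_prod[OF pr(1)] by blast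
    have "\<forall>p\<in>{..<N}. \<exists>S. infinite S \<and> S \<subseteq> V p \<and> (\<forall>i<d. \<forall>k\<le>\<gamma> i. p = bpos \<gamma> i k \<longrightarrow> S \<subseteq> Us i)"
    proof
      fix p assume "p \<in> {..<N}"
      then have "p < offs (\<lambda>l. Suc (\<gamma> l)) d" using bpos_offs[of \<gamma> d 0] by (simp add: N_def bpos_d0)
      from offs_exists[OF this] obtain i k where ik: "i < d" "k < Suc (\<gamma> i)" "p = bpos \<gamma> i k"
        by (auto simp: bpos_offs)
      have "y p \<in> Us i" using yU ik by auto
      then have yp: "y p \<in> closure (interior (Us i))" using pr(2)[OF ik(1)] by blast
      have Vp: "open (V p)" "y p \<in> V p" using V(1) ik bpos_less[of i d k \<gamma>] by (auto simp: N_def)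
      have ne: "V p \<inter> interior (Us i) \<noteq> {}"
        using open_Int_closure_eq_empty[OF Vp(1), of "interior (Us i)"] yp Vp(2) by blast
      have inf: "infinite (V p \<inter> interior (Us i))" using ne Vp(1) by (intro open_infinite[OF tf]) auto
      have "\<forall>i'<d. \<forall>k'\<le>\<gamma> i'. p = bpos \<gamma> i' k' \<longrightarrow> V p \<inter> interior (Us i) \<subseteq> Us i'"
        using ik bpos_inj[of k \<gamma> i] interior_subset by fastforce
      then show "\<exists>S. infinite S \<and> S \<subseteq> V p \<and> (\<forall>i<d. \<forall>k\<le>\<gamma> i. p = bpos \<gamma> i k \<longrightarrow> S \<subseteq> Us i)"
        using inf by blast
    qed
    then obtain S where S: "\<And>p. p < N \<Longrightarrow> infinite (S p) \<and> S p \<subseteq> V p \<and> (\<forall>i<d. \<forall>k\<le>\<gamma> i. p = bpos \<gamma> i k \<longrightarrow> S p \<subseteq> Us i)"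
      by (metis bchoice lessThan_iff)
    obtain z where z: "z \<in> PiE {..<N} S" "inj_on z {..<N}" using choose_inj[of "{..<N}" S] S by auto
    have "z \<in> PiE {..<N} V" using z(1) S unfolding PiE_iff by blast
    then have zO: "z \<in> Ob" using V(2) by auto
    have "z \<in> Ulow d U \<gamma>"
      unfolding Ulow_prod[OF pr(1)]
    proof (intro conjI allI impI)
      show "z \<in> topspace (Kn (d + absm d \<gamma>))" using z(1) by (auto simp: topspace_Kn N_def PiE_iff)
      fix i k assume ik: "i < d" "k \<le> \<gamma> i"
      have b: "bpos \<gamma> i k < N" using bpos_less[of i d k \<gamma>] ik by (simp add: N_def)
      have "z (bpos \<gamma> i k) \<in> S (bpos \<gamma> i k)" using z(1) b by (auto simp: PiE_iff)
      moreover have "S (bpos \<gamma> i k) \<subseteq> Us i" using S[OF b] ik by blast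
      ultimately show "z (bpos \<gamma> i k) \<in> Us i" by blast
    qed
    then show ?thesis using zO z(2) by (auto simp: N_def)
  qed
qed



lemma cm_add_F:
  fixes a b :: "'x \<Rightarrow> 'f::{ab_group_add,t2_space}"
  assumes tvs: "top_vector_space (smul :: 'k::{field,t2_space} \<Rightarrow> 'f \<Rightarrow> 'f)"
    and a: "continuous_map X euclidean a" and b: "continuous_map X euclidean b"
  shows "continuous_map X euclidean (\<lambda>x. a x + b x)"
proof -
  have 1: "continuous_map X euclidean (\<lambda>x. (a x, b x))" using continuous_map_pairedI[OF a b] by simp
  have 2: "continuous_map euclidean euclidean (\<lambda>p::'f\<times>'f. fst p + snd p)" using tvs by (simp add: top_vector_space_def)
  show ?thesis using continuous_map_compose[OF 1 2] by (simp add: o_def)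
qed

lemma cm_smul:
  fixes a :: "'x \<Rightarrow> 'k::{field,t2_space}" and b :: "'x \<Rightarrow> 'f::{ab_group_add,t2_space}"
  assumes tvs: "top_vector_space smul"
    and a: "continuous_map X euclidean a" and b: "continuous_map X euclidean b"
  shows "continuous_map X euclidean (\<lambda>x. smul (a x) (b x))"
proof -
  have 1: "continuous_map X euclidean (\<lambda>x. (a x, b x))" using continuous_map_pairedI[OF a b] by simp
  have 2: "continuous_map euclidean euclidean (\<lambda>p::'k\<times>'f. smul (fst p) (snd p))" using tvs by (simp add: top_vector_space_def)
  show ?thesis using continuous_map_compose[OF 1 2] by (simp add: o_def)
qed

lemma cm_sum_F:
  fixes h :: "'j \<Rightarrow> 'x \<Rightarrow> 'f::{ab_group_add,t2_space}"
  assumes tvs: "top_vector_space (smul :: 'k::{field,t2_space} \<Rightarrow> 'f \<Rightarrow> 'f)"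
    and "finite A" "\<And>j. j \<in> A \<Longrightarrow> continuous_map X euclidean (h j)"
  shows "continuous_map X euclidean (\<lambda>x. \<Sum>j\<in>A. h j x)"
  using assms(2,3)
proof (induction A rule: finite_induct)
  case empty then show ?case by simp
next
  case (insert a A)
  then show ?case by (simp add: cm_add_F[OF tvs])
qed

lemma cm_mult_K:
  fixes a b :: "'x \<Rightarrow> 'k::{field,t2_space}"
  assumes tf: "top_field TYPE('k)"
    and a: "continuous_map X euclidean a" and b: "continuous_map X euclidean b"
  shows "continuous_map X euclidean (\<lambda>x. a x * b x)"
proof -
  have 1: "continuous_map X euclidean (\<lambda>x. (a x, b x))" using continuous_map_pairedI[OF a b] by simp
  have 2: "continuous_map euclidean euclidean (\<lambda>p::'k\<times>'k. fst p * snd p)" using tf by (simp add: top_field_def)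
  show ?thesis using continuous_map_compose[OF 1 2] by (simp add: o_def)
qed

lemma cm_diff_K:
  fixes a b :: "'x \<Rightarrow> 'k::{field,t2_space}"
  assumes tf: "top_field TYPE('k)"
    and a: "continuous_map X euclidean a" and b: "continuous_map X euclidean b"
  shows "continuous_map X euclidean (\<lambda>x. a x - b x)"
proof -
  have 2: "continuous_map euclidean euclidean (\<lambda>x::'k. - x)" using tf by (simp add: top_field_def)
  have nb: "continuous_map X euclidean (\<lambda>x. - b x)" using continuous_map_compose[OF b 2] by (simp add: o_def)
  have 1: "continuous_map X euclidean (\<lambda>x. (a x, - b x))" using continuous_map_pairedI[OF a nb] by simp
  have 3: "continuous_map euclidean euclidean (\<lambda>p::'k\<times>'k. fst p + snd p)" using tf by (simp add: top_field_def)
  show ?thesis using continuous_map_compose[OF 1 3] by (simp add: o_def)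
qed

lemma cm_prod_K:
  fixes h :: "'j \<Rightarrow> 'x \<Rightarrow> 'k::{field,t2_space}"
  assumes tf: "top_field TYPE('k)"
    and "finite A" "\<And>j. j \<in> A \<Longrightarrow> continuous_map X euclidean (h j)"
  shows "continuous_map X euclidean (\<lambda>x. \<Prod>j\<in>A. h j x)"
  using assms(2,3)
proof (induction A rule: finite_induct)
  case empty then show ?case by simp
next
  case (insert a A)
  then show ?case by (simp add: cm_mult_K[OF tf])
qed

lemma cm_inverse_K:
  fixes a :: "'x \<Rightarrow> 'k::{field,t2_space}"
  assumes tf: "top_field TYPE('k)"
    and a: "continuous_map X euclidean a" and nz: "\<And>x. x \<in> topspace X \<Longrightarrow> a x \<noteq> 0"
  shows "continuous_map X euclidean (\<lambda>x. inverse (a x))"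
proof -
  have 1: "continuous_map X (subtopology euclidean (UNIV - {0})) a"
    using nz by (intro continuous_map_into_subtopology[OF a]) auto
  have 2: "continuous_map (subtopology euclidean (UNIV - {0})) euclidean (inverse :: 'k \<Rightarrow> 'k)"
    using tf by (simp add: top_field_def)
  show ?thesis using continuous_map_compose[OF 1 2] by (simp add: o_def)
qed

lemma cm_proj:
  assumes "p < N"
  shows "continuous_map (subtopology (Kn N) L) euclidean (\<lambda>x. x p)"
  using continuous_map_from_subtopology[OF continuous_map_product_projection[of p "{..<N}" "\<lambda>_. euclidean"]] assms
  by (simp add: Kn_def)



lemma cont_ddiff:
  fixes smul :: "'k::{field,t2_space} \<Rightarrow> 'f::{ab_group_add,t2_space} \<Rightarrow> 'f"
  assumes tf: "top_field TYPE('k)" and tvs: "top_vector_space smul"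
    and g: "continuous_map (subtopology (Kn n) L) euclidean g"
  shows "continuous_map (subtopology (Kn (n + absm n \<beta>)) (Ugt n L \<beta>)) euclidean (ddiff smul n \<beta> g)"
proof -
  let ?X = "subtopology (Kn (n + absm n \<beta>)) (Ugt n L \<beta>)"
  have eq: "ddiff smul n \<beta> g = (\<lambda>y. \<Sum>j'\<in>idx n \<beta>. smul (\<Prod>l<n. \<Prod>k\<in>{..\<beta> l} - {j' l}.
      inverse (y (bpos \<beta> l (j' l)) - y (bpos \<beta> l k))) (g (pick n \<beta> y j')))"
    by (simp add: ddiff_def fun_eq_iff)
  show ?thesis unfolding eq
  proof (rule cm_sum_F[OF tvs])
    show "finite (idx n \<beta>)" by (simp add: idx_def finite_PiE)
    fix j' assume j': "j' \<in> idx n \<beta>"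
    show "continuous_map ?X euclidean (\<lambda>y. smul (\<Prod>l<n. \<Prod>k\<in>{..\<beta> l} - {j' l}.
      inverse (y (bpos \<beta> l (j' l)) - y (bpos \<beta> l k))) (g (pick n \<beta> y j')))"
    proof (rule cm_smul[OF tvs])
      show "continuous_map ?X euclidean (\<lambda>y. \<Prod>l<n. \<Prod>k\<in>{..\<beta> l} - {j' l}.
          inverse (y (bpos \<beta> l (j' l)) - y (bpos \<beta> l k)))"
      proof (rule cm_prod_K[OF tf], simp)
        fix l assume l: "l \<in> {..<n}"
        have jl: "j' l \<le> \<beta> l" using j' l by (auto simp: idx_iff)
        show "continuous_map ?X euclidean (\<lambda>y. \<Prod>k\<in>{..\<beta> l} - {j' l}. inverse (y (bpos \<beta> l (j' l)) - y (bpos \<beta> l k)))"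
        proof (rule cm_prod_K[OF tf], simp)
          fix k assume k: "k \<in> {..\<beta> l} - {j' l}"
          show "continuous_map ?X euclidean (\<lambda>y. inverse (y (bpos \<beta> l (j' l)) - y (bpos \<beta> l k)))"
          proof (rule cm_inverse_K[OF tf])
            show "continuous_map ?X euclidean (\<lambda>y. y (bpos \<beta> l (j' l)) - y (bpos \<beta> l k))"
            proof -
              have p1: "bpos \<beta> l (j' l) < n + absm n \<beta>" using l jl bpos_less[of l n "j' l" \<beta>] by simp
              have p2: "bpos \<beta> l k < n + absm n \<beta>" using l k bpos_less[of l n k \<beta>] by simp
              show ?thesis by (rule cm_diff_K[OF tf cm_proj[OF p1] cm_proj[OF p2]])
            qed
            fix y assume "y \<in> topspace ?X"
            then have "y \<in> Ugt n L \<beta>" by simp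
            then have "\<forall>i<n. \<forall>a\<le>\<beta> i. \<forall>b\<le>\<beta> i. a \<noteq> b \<longrightarrow> y (bpos \<beta> i a) \<noteq> y (bpos \<beta> i b)"
              unfolding Ugt_def by blast
            then have "y (bpos \<beta> l (j' l)) \<noteq> y (bpos \<beta> l k)" using l k jl by auto
            then show "y (bpos \<beta> l (j' l)) - y (bpos \<beta> l k) \<noteq> 0" by simp
          qed
        qed
      qed
      have cp: "continuous_map ?X (subtopology (Kn n) L) (\<lambda>y. pick n \<beta> y j')"
      proof (rule continuous_map_into_subtopology)
        show "continuous_map ?X (Kn n) (\<lambda>y. pick n \<beta> y j')"
          by (rule continuous_map_from_subtopology[OF continuous_pick[OF j']])
        show "(\<lambda>y. pick n \<beta> y j') \<in> topspace ?X \<rightarrow> L"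
        proof
          fix y assume "y \<in> topspace ?X"
          then have "y \<in> Ulow n L \<beta>" by (simp add: Ugt_def)
          then show "pick n \<beta> y j' \<in> L" using j' unfolding Ulow_def by blast
        qed
      qed
      show "continuous_map ?X euclidean (\<lambda>y. g (pick n \<beta> y j'))"
        using continuous_map_compose[OF cp g] by (simp add: o_def)
    qed
  qed
qed

lemma agree_dense:
  fixes g1 g2 :: "'x \<Rightarrow> 'f::t2_space"
  assumes c1: "continuous_map (subtopology X L) euclidean g1"
    and c2: "continuous_map (subtopology X L) euclidean g2"
    and L: "L \<subseteq> topspace X" and y: "y \<in> L"
    and dense: "\<And>W. openin X W \<Longrightarrow> y \<in> W \<Longrightarrow> \<exists>z\<in>W. z \<in> L \<and> g1 z = g2 z"
  shows "g1 y = g2 y"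
proof (rule ccontr)
  assume ne: "g1 y \<noteq> g2 y"
  obtain A B where AB: "open A" "open B" "g1 y \<in> A" "g2 y \<in> B" "A \<inter> B = {}"
    using hausdorff[OF ne] by blast
  have "openin (subtopology X L) {x \<in> topspace (subtopology X L). g1 x \<in> A}"
    using AB by (intro openin_continuous_map_preimage[OF c1]) simp
  then have "\<exists>T. openin X T \<and> {x \<in> topspace (subtopology X L). g1 x \<in> A} = T \<inter> L"
    by (simp only: openin_subtopology)
  then obtain T1 where T1: "openin X T1" "{x \<in> topspace (subtopology X L). g1 x \<in> A} = T1 \<inter> L"
    by (elim exE conjE)
  have "openin (subtopology X L) {x \<in> topspace (subtopology X L). g2 x \<in> B}"
    using AB by (intro openin_continuous_map_preimage[OF c2]) simp
  then have "\<exists>T. openin X T \<and> {x \<in> topspace (subtopology X L). g2 x \<in> B} = T \<inter> L"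
    by (simp only: openin_subtopology)
  then obtain T2 where T2: "openin X T2" "{x \<in> topspace (subtopology X L). g2 x \<in> B} = T2 \<inter> L"
    by (elim exE conjE)
  have yX: "y \<in> topspace X" using y L by (rule subsetD[rotated])
  have "y \<in> {x \<in> topspace (subtopology X L). g1 x \<in> A}" using yX y AB(3) by simp
  then have yT1: "y \<in> T1" unfolding T1(2) by simp
  have "y \<in> {x \<in> topspace (subtopology X L). g2 x \<in> B}" using yX y AB(4) by simp
  then have yT2: "y \<in> T2" unfolding T2(2) by simp
  have "openin X (T1 \<inter> T2)" using T1(1) T2(1) by (rule openin_Int)
  then obtain z where z: "z \<in> T1 \<inter> T2" "z \<in> L" "g1 z = g2 z"
    using dense yT1 yT2 by blast
  have "z \<in> T1 \<inter> L" using z by simp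
  then have g1A: "g1 z \<in> A" unfolding T1(2)[symmetric] by simp
  have "z \<in> T2 \<inter> L" using z by simp
  then have g2B: "g2 z \<in> B" unfolding T2(2)[symmetric] by simp
  show False using g1A g2B z(3) AB(5) by auto
qed

lemma inj_Ugt:
  assumes "z \<in> Ulow d U \<alpha>" "inj_on z {..<d + absm d \<alpha>}"
  shows "z \<in> Ugt d U \<alpha>"
  unfolding Ugt_def
proof (intro CollectI conjI allI impI assms(1))
  fix i a b assume "i < d" "a \<le> \<alpha> i" "b \<le> \<alpha> i" "a \<noteq> b"
  then show "z (bpos \<alpha> i a) \<noteq> z (bpos \<alpha> i b)"
    using inj_onD[OF assms(2), of "bpos \<alpha> i a" "bpos \<alpha> i b"] bpos_less[of i d a \<alpha>] bpos_less[of i d b \<alpha>]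
    by (auto simp: bpos_def)
qed

lemma inj_pick:
  assumes "inj_on z {..<n + absm n \<beta>}" "j' \<in> idx n \<beta>"
  shows "inj_on (pick n \<beta> z j') {..<n}"
proof (rule inj_onI)
  fix p q assume pq: "p \<in> {..<n}" "q \<in> {..<n}" "pick n \<beta> z j' p = pick n \<beta> z j' q"
  have jp: "j' p \<le> \<beta> p" "j' q \<le> \<beta> q" using assms(2) pq by (auto simp: idx_iff)
  have "z (bpos \<beta> p (j' p)) = z (bpos \<beta> q (j' q))" using pq by (simp add: pick_def)
  then have "bpos \<beta> p (j' p) = bpos \<beta> q (j' q)"
    using inj_onD[OF assms(1)] bpos_less[of p n "j' p" \<beta>] bpos_less[of q n "j' q" \<beta>] pq jp by auto
  then show "p = q" using bpos_inj[of "j' p" \<beta> p "j' q" q] jp by simp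
qed



lemma comp_surj:
  assumes m: "m \<in> idx d (gam \<alpha> \<beta>)"
  shows "\<exists>j'\<in>idx (d + absm d \<alpha>) \<beta>. \<exists>j\<in>idx d \<alpha>. compj \<alpha> \<beta> d j' j = m"
proof -
  define n where "n = d + absm d \<alpha>"
  define szb where "szb = (\<lambda>i k. Suc (\<beta> (bpos \<alpha> i k)))"
  have offb_szb: "offb \<alpha> \<beta> i = offs (szb i)" for i by (simp add: offb_def szb_def)
  have "\<forall>i\<in>{..<d}. \<exists>ks. fst ks < Suc (\<alpha> i) \<and> snd ks < szb i (fst ks) \<and> m i = offb \<alpha> \<beta> i (fst ks) + snd ks"
  proof
    fix i assume i: "i \<in> {..<d}"
    have "m i < offs (szb i) (Suc (\<alpha> i))"
      using m i offb_top[of \<alpha> \<beta> i] by (auto simp: idx_iff offb_szb)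
    from offs_exists[OF this] obtain k s where "k < Suc (\<alpha> i)" "s < szb i k" "m i = offs (szb i) k + s" by blast
    then show "\<exists>ks. fst ks < Suc (\<alpha> i) \<and> snd ks < szb i (fst ks) \<and> m i = offb \<alpha> \<beta> i (fst ks) + snd ks"
      by (intro exI[of _ "(k, s)"]) (simp add: offb_szb)
  qed
  then obtain h where h: "\<And>i. i < d \<Longrightarrow> fst (h i) < Suc (\<alpha> i) \<and> snd (h i) < szb i (fst (h i))
      \<and> m i = offb \<alpha> \<beta> i (fst (h i)) + snd (h i)"
    by (metis bchoice lessThan_iff)
  define g where "g = restrict (\<lambda>i. fst (h i)) {..<d}"
  define u where "u = restrict (\<lambda>i. snd (h i)) {..<d}"
  have gi: "g i \<le> \<alpha> i" and ui: "u i \<le> \<beta> (bpos \<alpha> i (g i))" and mi: "m i = offb \<alpha> \<beta> i (g i) + u i"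
    if "i < d" for i using h[OF that] that by (auto simp: g_def u_def szb_def)
  have g_idx: "g \<in> idx d \<alpha>" using gi by (auto simp: idx_iff g_def)
  define j' where "j' = restrict (\<lambda>p. \<Sum>i<d. if p = bpos \<alpha> i (g i) then u i else 0) {..<n}"
  have val: "(\<Sum>i<d. if bpos \<alpha> i0 (g i0) = bpos \<alpha> i (g i) then u i else 0) = u i0" if i0: "i0 < d" for i0
  proof -
    have "(\<Sum>i<d. if bpos \<alpha> i0 (g i0) = bpos \<alpha> i (g i) then u i else 0) = (\<Sum>i<d. if i = i0 then u i else 0)"
    proof (rule sum.cong[OF refl])
      fix i assume "i \<in> {..<d}"
      then have "bpos \<alpha> i0 (g i0) = bpos \<alpha> i (g i) \<longleftrightarrow> i = i0"
        using bpos_inj[of "g i0" \<alpha> i0 "g i" i] gi i0 by auto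
      then show "(if bpos \<alpha> i0 (g i0) = bpos \<alpha> i (g i) then u i else 0) = (if i = i0 then u i else 0)" by simp
    qed
    also have "\<dots> = u i0" using i0 by simp
    finally show ?thesis .
  qed
  have bl: "bpos \<alpha> i k < n" if "i < d" "k \<le> \<alpha> i" for i k using bpos_less[of i d k \<alpha>] that by (simp add: n_def)
  have j'u: "j' (bpos \<alpha> i (g i)) = u i" if "i < d" for i
    using val[OF that] bl[OF that gi[OF that]] by (simp add: j'_def)
  have j'_idx: "j' \<in> idx n \<beta>"
    unfolding idx_iff
  proof (intro conjI allI impI)
    fix p assume p: "p < n"
    show "j' p \<le> \<beta> p"
    proof (cases "\<exists>i<d. p = bpos \<alpha> i (g i)")
      case True
      then obtain i where "i < d" "p = bpos \<alpha> i (g i)" by blast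
      then show ?thesis using j'u ui by simp
    next
      case False
      then have "(\<Sum>i<d. if p = bpos \<alpha> i (g i) then u i else 0) = 0" by (intro sum.neutral) auto
      then show ?thesis using p by (simp add: j'_def)
    qed
  next
    fix p assume "n \<le> p" then show "j' p = undefined" by (simp add: j'_def)
  qed
  have "compj \<alpha> \<beta> d j' g = m"
  proof
    fix i show "compj \<alpha> \<beta> d j' g i = m i"
      using m j'u mi by (cases "i < d") (auto simp: compj_def idx_iff)
  qed
  then show ?thesis using j'_idx g_idx by (auto simp: n_def)
qed

lemma topspace_Kn_pick: "pick n \<beta> x j \<in> topspace (Kn n)"
  by (simp add: topspace_Kn pick_def)

lemma Ulow_comp: "Ulow (d + absm d \<alpha>) (Ulow d U \<alpha>) \<beta> = Ulow d U (gam \<alpha> \<beta>)"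
proof (rule set_eqI)
  fix x :: "nat \<Rightarrow> 'a"
  have "x \<in> Ulow (d + absm d \<alpha>) (Ulow d U \<alpha>) \<beta> \<longleftrightarrow>
      x \<in> topspace (Kn (d + absm d (gam \<alpha> \<beta>))) \<and>
      (\<forall>j'\<in>idx (d + absm d \<alpha>) \<beta>. \<forall>j\<in>idx d \<alpha>. pick d (gam \<alpha> \<beta>) x (compj \<alpha> \<beta> d j' j) \<in> U)"
    unfolding Ulow_def dims by (auto simp: topspace_Kn_pick pick_comp)
  also have "\<dots> \<longleftrightarrow> x \<in> Ulow d U (gam \<alpha> \<beta>)"
  proof -
    have "(\<forall>j'\<in>idx (d + absm d \<alpha>) \<beta>. \<forall>j\<in>idx d \<alpha>. pick d (gam \<alpha> \<beta>) x (compj \<alpha> \<beta> d j' j) \<in> U)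
        \<longleftrightarrow> (\<forall>m\<in>idx d (gam \<alpha> \<beta>). pick d (gam \<alpha> \<beta>) x m \<in> U)"
    proof
      assume "\<forall>j'\<in>idx (d + absm d \<alpha>) \<beta>. \<forall>j\<in>idx d \<alpha>. pick d (gam \<alpha> \<beta>) x (compj \<alpha> \<beta> d j' j) \<in> U"
      then show "\<forall>m\<in>idx d (gam \<alpha> \<beta>). pick d (gam \<alpha> \<beta>) x m \<in> U" using comp_surj by metis
    next
      assume "\<forall>m\<in>idx d (gam \<alpha> \<beta>). pick d (gam \<alpha> \<beta>) x m \<in> U"
      then show "\<forall>j'\<in>idx (d + absm d \<alpha>) \<beta>. \<forall>j\<in>idx d \<alpha>. pick d (gam \<alpha> \<beta>) x (compj \<alpha> \<beta> d j' j) \<in> U"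
        using comp_idx by blast
    qed
    then show ?thesis by (simp add: Ulow_def)
  qed
  finally show "x \<in> Ulow (d + absm d \<alpha>) (Ulow d U \<alpha>) \<beta> \<longleftrightarrow> x \<in> Ulow d U (gam \<alpha> \<beta>)" .
qed



lemma core:
  fixes smul :: "'k::{field,t2_space} \<Rightarrow> 'f::{ab_group_add,t2_space} \<Rightarrow> 'f"
  assumes tf: "top_field TYPE('k)" and tvs: "top_vector_space smul"
    and adm: "admissible_domain d U"
    and hg: "is_sds_ext smul d U \<alpha> f g"
    and hh: "is_sds_ext smul d U (gam \<alpha> \<beta>) f h"
  shows "is_sds_ext smul (d + absm d \<alpha>) (Ulow d U \<alpha>) \<beta> g h"
proof -
  define n where "n = d + absm d \<alpha>"
  define N where "N = d + absm d (gam \<alpha> \<beta>)"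
  have dimsN: "n + absm n \<beta> = N" using dims[of d \<alpha> \<beta>] by (simp add: n_def N_def)
  have UL: "Ulow n (Ulow d U \<alpha>) \<beta> = Ulow d U (gam \<alpha> \<beta>)" by (simp add: n_def Ulow_comp)
  have vs: "vector_space smul" using tvs by (simp add: top_vector_space_def)
  have hc: "continuous_map (subtopology (Kn N) (Ulow d U (gam \<alpha> \<beta>))) euclidean h"
    using hh by (simp add: is_sds_ext_def N_def)
  have gc: "continuous_map (subtopology (Kn n) (Ulow d U \<alpha>)) euclidean g"
    using hg by (simp add: is_sds_ext_def n_def)
  have Ugt_sub: "Ugt n (Ulow d U \<alpha>) \<beta> \<subseteq> Ulow d U (gam \<alpha> \<beta>)"
    using UL by (auto simp: Ugt_def)
  have agree: "h z = ddiff smul n \<beta> g z" if z: "z \<in> Ulow d U (gam \<alpha> \<beta>)" "inj_on z {..<N}" for z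
  proof -
    have zUgt: "z \<in> Ugt d U (gam \<alpha> \<beta>)" using inj_Ugt[of z d U "gam \<alpha> \<beta>"] z by (simp add: N_def)
    have "h z = ddiff smul d (gam \<alpha> \<beta>) f z" using hh zUgt by (simp add: is_sds_ext_def)
    also have "\<dots> = ddiff smul (d + absm d \<alpha>) \<beta> g z"
    proof (rule ddiff_comp[OF vs, symmetric])
      show "inj_on z {..<d + absm d (gam \<alpha> \<beta>)}" using z by (simp add: N_def)
      fix j' assume j': "j' \<in> idx (d + absm d \<alpha>) \<beta>"
      have zl: "z \<in> Ulow n (Ulow d U \<alpha>) \<beta>" using UL z by simp
      then have "pick n \<beta> z j' \<in> Ulow d U \<alpha>" using j' unfolding Ulow_def n_def by blast
      moreover have "inj_on (pick n \<beta> z j') {..<n}"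
        using inj_pick[of z n \<beta> j'] z j' dimsN by (simp add: n_def)
      ultimately have "pick n \<beta> z j' \<in> Ugt d U \<alpha>" using inj_Ugt[of "pick n \<beta> z j'" d U \<alpha>] by (simp add: n_def)
      then show "g (pick (d + absm d \<alpha>) \<beta> z j') = ddiff smul d \<alpha> f (pick (d + absm d \<alpha>) \<beta> z j')"
        using hg by (simp add: is_sds_ext_def n_def)
    qed
    finally show ?thesis by (simp add: n_def)
  qed
  have part2: "h y = ddiff smul n \<beta> g y" if y: "y \<in> Ugt n (Ulow d U \<alpha>) \<beta>" for y
  proof (rule agree_dense[of "Kn N" "Ugt n (Ulow d U \<alpha>) \<beta>"])
    show "continuous_map (subtopology (Kn N) (Ugt n (Ulow d U \<alpha>) \<beta>)) euclidean h"
      by (rule continuous_map_from_subtopology_mono[OF hc Ugt_sub])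
    show "continuous_map (subtopology (Kn N) (Ugt n (Ulow d U \<alpha>) \<beta>)) euclidean (ddiff smul n \<beta> g)"
      using cont_ddiff[OF tf tvs gc, of \<beta>] by (simp add: dimsN)
    show "Ugt n (Ulow d U \<alpha>) \<beta> \<subseteq> topspace (Kn N)"
      using dimsN by (auto simp: Ugt_def Ulow_def)
    show "y \<in> Ugt n (Ulow d U \<alpha>) \<beta>" by fact
    fix W assume W: "openin (Kn N) W" "y \<in> W"
    have yl: "y \<in> Ulow d U (gam \<alpha> \<beta>)" using y Ugt_sub by blast
    obtain z where z: "z \<in> W" "z \<in> Ulow d U (gam \<alpha> \<beta>)" "inj_on z {..<N}"
      using dense_inj[OF tf adm yl, of W] W by (auto simp: N_def)
    have "z \<in> Ugt n (Ulow d U \<alpha>) \<beta>"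
      using inj_Ugt[of z n "Ulow d U \<alpha>" \<beta>] z UL dimsN by simp
    then show "\<exists>z\<in>W. z \<in> Ugt n (Ulow d U \<alpha>) \<beta> \<and> h z = ddiff smul n \<beta> g z"
      using z agree by blast
  qed
  show ?thesis
    unfolding is_sds_ext_def n_def[symmetric]
    using hc part2 by (simp add: dimsN UL)
qed



lemma uniq_new:
  fixes smul :: "'k::{field,t2_space} \<Rightarrow> 'f::{ab_group_add,t2_space} \<Rightarrow> 'f"
  assumes tf: "top_field TYPE('k)" and adm: "admissible_domain d U"
    and h1: "is_sds_ext smul (d + absm d \<alpha>) (Ulow d U \<alpha>) \<beta> g h1"
    and h2: "is_sds_ext smul (d + absm d \<alpha>) (Ulow d U \<alpha>) \<beta> g h2"
    and x: "x \<in> Ulow d U (gam \<alpha> \<beta>)"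
  shows "h1 x = h2 x"
proof -
  define n where "n = d + absm d \<alpha>"
  define N where "N = d + absm d (gam \<alpha> \<beta>)"
  have dimsN: "n + absm n \<beta> = N" using dims[of d \<alpha> \<beta>] by (simp add: n_def N_def)
  have UL: "Ulow n (Ulow d U \<alpha>) \<beta> = Ulow d U (gam \<alpha> \<beta>)" by (simp add: n_def Ulow_comp)
  show ?thesis
  proof (rule agree_dense[of "Kn N" "Ulow d U (gam \<alpha> \<beta>)"])
    show "continuous_map (subtopology (Kn N) (Ulow d U (gam \<alpha> \<beta>))) euclidean h1"
      using h1 by (simp add: is_sds_ext_def n_def[symmetric] dimsN UL)
    show "continuous_map (subtopology (Kn N) (Ulow d U (gam \<alpha> \<beta>))) euclidean h2"
      using h2 by (simp add: is_sds_ext_def n_def[symmetric] dimsN UL)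
    show "Ulow d U (gam \<alpha> \<beta>) \<subseteq> topspace (Kn N)" by (auto simp: Ulow_def N_def)
    show "x \<in> Ulow d U (gam \<alpha> \<beta>)" by fact
    fix W assume W: "openin (Kn N) W" "x \<in> W"
    obtain z where z: "z \<in> W" "z \<in> Ulow d U (gam \<alpha> \<beta>)" "inj_on z {..<N}"
      using dense_inj[OF tf adm x, of W] W by (auto simp: N_def)
    have zg: "z \<in> Ugt n (Ulow d U \<alpha>) \<beta>"
      using inj_Ugt[of z n "Ulow d U \<alpha>" \<beta>] z UL dimsN by simp
    have "h1 z = h2 z" using h1 h2 zg by (simp add: is_sds_ext_def n_def)
    then show "\<exists>z\<in>W. z \<in> Ulow d U (gam \<alpha> \<beta>) \<and> h1 z = h2 z" using z by blast
  qed
qed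

lemma C0sigma_cong:
  assumes "\<And>x. x \<in> V \<Longrightarrow> g1 x = g2 x" "C0sigma absv smul n \<sigma> V g1"
  shows "C0sigma absv smul n \<sigma> V g2"
proof -
  have "\<forall>x\<in>W \<inter> V. \<forall>y\<in>W \<inter> V. q (g2 y - g2 x) \<le> p (vdiff n y x) powr \<sigma>"
    if "\<forall>x\<in>W \<inter> V. \<forall>y\<in>W \<inter> V. q (g1 y - g1 x) \<le> p (vdiff n y x) powr \<sigma>" for W q p
    using that assms(1) by auto
  then show ?thesis using assms(2) unfolding C0sigma_def by metis
qed

lemma part_k:
  fixes smul :: "'k::{field,t2_space} \<Rightarrow> 'f::{ab_group_add,t2_space} \<Rightarrow> 'f"
  assumes tf: "top_field TYPE('k)" and tvs: "top_vector_space smul"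
    and adm: "admissible_domain d U"
    and C: "CkSDS smul d U k f" and a: "absm d \<alpha> \<le> k"
  shows "CkSDS smul (d + absm d \<alpha>) (Ulow d U \<alpha>) (k - absm d \<alpha>) (sds_ext smul d U \<alpha> f)"
proof -
  have hg: "is_sds_ext smul d U \<alpha> f (sds_ext smul d U \<alpha> f)"
    using C a unfolding CkSDS_def sds_ext_def by (metis someI_ex)
  show ?thesis unfolding CkSDS_def
  proof (intro allI impI)
    fix \<beta> assume b: "absm (d + absm d \<alpha>) \<beta> \<le> k - absm d \<alpha>"
    then have "absm d (gam \<alpha> \<beta>) \<le> k" using a by (simp add: absm_gam)
    then obtain h where hh: "is_sds_ext smul d U (gam \<alpha> \<beta>) f h" using C unfolding CkSDS_def by blast
    show "\<exists>h. is_sds_ext smul (d + absm d \<alpha>) (Ulow d U \<alpha>) \<beta> (sds_ext smul d U \<alpha> f) h"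
      using core[OF tf tvs adm hg hh] by blast
  qed
qed

theorem lemma2p4:
  fixes smul :: "'k::{field,t2_space} \<Rightarrow> 'f::{ab_group_add,t2_space} \<Rightarrow> 'f"
    and d k :: nat and U :: "(nat \<Rightarrow> 'k) set" and f :: "(nat \<Rightarrow> 'k) \<Rightarrow> 'f"
  assumes "top_field TYPE('k)"
    and "top_vector_space smul"
    and "d \<ge> 1"
    and "admissible_domain d U"
  shows "(CkSDS smul d U k f \<longrightarrow>
            (\<forall>\<alpha>. absm d \<alpha> \<le> k \<longrightarrow>
               CkSDS smul (d + absm d \<alpha>) (Ulow d U \<alpha>) (k - absm d \<alpha>) (sds_ext smul d U \<alpha> f)))
       \<and> (\<forall>absv \<sigma>. valued_field absv \<and> \<sigma> > 0 \<and> CksigmaSDS absv smul d U k \<sigma> f \<longrightarrow>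
            (\<forall>\<alpha>. absm d \<alpha> \<le> k \<longrightarrow>
               CksigmaSDS absv smul (d + absm d \<alpha>) (Ulow d U \<alpha>) (k - absm d \<alpha>) \<sigma> (sds_ext smul d U \<alpha> f)))"
proof (intro conjI allI impI)
  fix \<alpha> assume "CkSDS smul d U k f" "absm d \<alpha> \<le> k"
  then show "CkSDS smul (d + absm d \<alpha>) (Ulow d U \<alpha>) (k - absm d \<alpha>) (sds_ext smul d U \<alpha> f)"
    using part_k[OF assms(1,2,4)] by blast
next
  fix absv \<sigma> \<alpha>
  assume H: "valued_field absv \<and> \<sigma> > 0 \<and> CksigmaSDS absv smul d U k \<sigma> f" and a: "absm d \<alpha> \<le> k"
  have C: "CkSDS smul d U k f" using H by (simp add: CksigmaSDS_def)
  have S: "\<And>\<gamma>. absm d \<gamma> \<le> k \<Longrightarrow> C0sigma absv smul (d + absm d \<gamma>) \<sigma> (Ulow d U \<gamma>) (sds_ext smul d U \<gamma> f)"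
    using H by (simp add: CksigmaSDS_def)
  define g where "g = sds_ext smul d U \<alpha> f"
  have hg: "is_sds_ext smul d U \<alpha> f g"
    using C a unfolding CkSDS_def sds_ext_def g_def by (metis someI_ex)
  have Cnew: "CkSDS smul (d + absm d \<alpha>) (Ulow d U \<alpha>) (k - absm d \<alpha>) g"
    using part_k[OF assms(1,2,4) C a] by (simp add: g_def)
  have "C0sigma absv smul (d + absm d \<alpha> + absm (d + absm d \<alpha>) \<beta>) \<sigma> (Ulow (d + absm d \<alpha>) (Ulow d U \<alpha>) \<beta>)
          (sds_ext smul (d + absm d \<alpha>) (Ulow d U \<alpha>) \<beta> g)"
    if b: "absm (d + absm d \<alpha>) \<beta> \<le> k - absm d \<alpha>" for \<beta>
  proof -
    have gk: "absm d (gam \<alpha> \<beta>) \<le> k" using a b by (simp add: absm_gam)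
    define h where "h = sds_ext smul d U (gam \<alpha> \<beta>) f"
    have hh: "is_sds_ext smul d U (gam \<alpha> \<beta>) f h"
      using C gk unfolding CkSDS_def sds_ext_def h_def by (metis someI_ex)
    have h1: "is_sds_ext smul (d + absm d \<alpha>) (Ulow d U \<alpha>) \<beta> g h" by (rule core[OF assms(1,2,4) hg hh])
    have h2: "is_sds_ext smul (d + absm d \<alpha>) (Ulow d U \<alpha>) \<beta> g (sds_ext smul (d + absm d \<alpha>) (Ulow d U \<alpha>) \<beta> g)"
      using h1 unfolding sds_ext_def by (metis someI_ex)
    have eq: "\<And>x. x \<in> Ulow d U (gam \<alpha> \<beta>) \<Longrightarrow> h x = sds_ext smul (d + absm d \<alpha>) (Ulow d U \<alpha>) \<beta> g x"
      using uniq_new[OF assms(1,4) h1 h2] by blast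
    have "C0sigma absv smul (d + absm d (gam \<alpha> \<beta>)) \<sigma> (Ulow d U (gam \<alpha> \<beta>)) h"
      using S[OF gk] by (simp add: h_def)
    then have "C0sigma absv smul (d + absm d (gam \<alpha> \<beta>)) \<sigma> (Ulow d U (gam \<alpha> \<beta>))
        (sds_ext smul (d + absm d \<alpha>) (Ulow d U \<alpha>) \<beta> g)"
      using C0sigma_cong[of "Ulow d U (gam \<alpha> \<beta>)" h "sds_ext smul (d + absm d \<alpha>) (Ulow d U \<alpha>) \<beta> g"
          absv smul "d + absm d (gam \<alpha> \<beta>)" \<sigma>] eq by blast
    then show ?thesis by (simp add: dims Ulow_comp)
  qed
  then show "CksigmaSDS absv smul (d + absm d \<alpha>) (Ulow d U \<alpha>) (k - absm d \<alpha>) \<sigma> (sds_ext smul d U \<alpha> f)"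
    unfolding CksigmaSDS_def g_def[symmetric] using Cnew by blast
qed

end
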